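(* Let $k$ be a commutative ring, $H$ a Hopf algebra over $k$ with bijective antipode $S$ (inverse $\overline{S}$), and $A$ a right $H$-comodule algebra. Then there is an isomorphism of categories $\gamma:\ \mathcal{C}'_A\to\mathcal{C}_A$ which is the identity on objects and is given on morphisms by $\gamma(f')=f'\circ S$; in particular $f'\circ S\in\mathcal{C}_A(\mathbf{i},\mathbf{j})$ for every $f'\in\mathcal{C}'_A(\mathbf{i},\mathbf{j})$, $\gamma(g'\star f')=\gamma(g')*\gamma(f')$, and the inverse functor is $f\mapsto f\circ\overline{S}$.
   Context: Sweedler notation: $\Delta(h)=h_{(1)}\otimes h_{(2)}$, and for a right $H$-comodule, $\rho(a)=a_{[0]}\otimes a_{[1]}$. A right $H$-comodule algebra is an algebra $A$ with a right $H$-coaction $\rho$ that is an algebra map. Let $B=A^{\mathrm{co}H}=\{a\in A:\rho(a)=a\otimes 1\}$. The category $\mathcal{C}_A$ has two objects $\mathbf{1},\mathbf{2}$; writing $\mathcal{C}_A(\mathbf{i},\mathbf{j})$ for the morphisms from $\mathbf{i}$ to $\mathbf{j}$, all of them sets of $k$-linear maps $H\to A$: $\mathcal{C}_A(\mathbf{1},\mathbf{1})=\{v:\rho(v(h))=v(h)\otimes 1\}=\mathrm{Hom}(H,B)$; $\mathcal{C}_A(\mathbf{2},\mathbf{1})=\{t:\rho(t(h))=t(h_{(1)})\otimes h_{(2)}\}=\mathrm{Hom}^H(H,A)$; $\mathcal{C}_A(\mathbf{1},\mathbf{2})=\{u:\rho(u(h))=u(h_{(2)})\otimes S(h_{(1)})\}$;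 $\mathcal{C}_A(\mathbf{2},\mathbf{2})=\{w:\rho(w(h))=w(h_{(2)})\otimes S(h_{(1)})h_{(3)}\}$ (all conditions for all $h\in H$). Composition of $f:\mathbf{i}\to\mathbf{j}$ and $g:\mathbf{j}\to\mathbf{k}$ is the convolution $g*f$, $(g*f)(h)=g(h_{(1)})f(h_{(2)})$; identities are $h\mapsto\varepsilon(h)1_A$. The category $\mathcal{C}'_A$ has objects $\mathbf{1},\mathbf{2}$ and morphism sets of $k$-linear maps $H\to A$: $\mathcal{C}'_A(\mathbf{1},\mathbf{1})=\mathrm{Hom}(H,B)$; $\mathcal{C}'_A(\mathbf{1},\mathbf{2})=\{t':\rho(t'(h))=t'(h_{(1)})\otimes h_{(2)}\}=\mathrm{Hom}^H(H,A)$; $\mathcal{C}'_A(\mathbf{2},\mathbf{1})=\{u':\rho(u'(h))=u'(h_{(2)})\otimes \overline{S}(h_{(1)})\}$; $\mathcal{C}'_A(\mathbf{2},\mathbf{2})=\{w':\rho(w'(h))=w'(h_{(2)})\otimes h_{(3)}\overline{S}(h_{(1)})\}$; composition of $f':\mathbf{i}\to\mathbf{j}$ and $g':\mathbf{j}\to\mathbf{k}$ is $g'\star f'$, $(g'\star f')(h)=g'(h_{(2)})f'(h_{(1)})$. *)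

theory Defs
  imports Complex_Main "HOL-Library.Function_Algebras"
begin

text \<open>An element of a tensor product M1 (x) ... (x) Mn over the commutative ring k is
represented by a finite list of elementary tensors (scalars are absorbed into the
first factor).  Two such lists denote the same tensor iff the difference of the
associated elements of the free k-module on M1 x ... x Mn lies in the k-span of the
standard (multi)linearity relations.\<close>

definition fscale :: "'k::comm_ring_1 \<Rightarrow> ('x \<Rightarrow> 'k) \<Rightarrow> ('x \<Rightarrow> 'k)" where
  "fscale c f = (\<lambda>q. c * f q)"

definition dlt :: "'x \<Rightarrow> ('x \<Rightarrow> 'k::comm_ring_1)" where
  "dlt p = (\<lambda>q. if q = p then 1 else 0)"

definition fs :: "'x list \<Rightarrow> ('x \<Rightarrow> 'k::comm_ring_1)" where
  "fs xs = (\<lambda>q. of_nat (count_list xs q))"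

definition gen2 :: "('k::comm_ring_1 \<Rightarrow> 'm::ab_group_add \<Rightarrow> 'm) \<Rightarrow>
    ('k \<Rightarrow> 'n::ab_group_add \<Rightarrow> 'n) \<Rightarrow> (('m \<times> 'n) \<Rightarrow> 'k) set" where
  "gen2 sM sN =
     {dlt (m + m', n) - dlt (m, n) - dlt (m', n) | m m' n. True} \<union>
     {dlt (m, n + n') - dlt (m, n) - dlt (m, n') | m n n'. True} \<union>
     {dlt (sM c m, n) - fscale c (dlt (m, n)) | c m n. True} \<union>
     {dlt (m, sN c n) - fscale c (dlt (m, n)) | c m n. True}"

definition teq2 :: "('k::comm_ring_1 \<Rightarrow> 'm::ab_group_add \<Rightarrow> 'm) \<Rightarrow>
    ('k \<Rightarrow> 'n::ab_group_add \<Rightarrow> 'n) \<Rightarrow> ('m \<times> 'n) list \<Rightarrow> ('m \<times> 'n) list \<Rightarrow> bool" where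
  "teq2 sM sN xs ys \<longleftrightarrow>
     (fs xs - fs ys :: ('m \<times> 'n) \<Rightarrow> 'k) \<in> module.span fscale (gen2 sM sN)"

definition gen3 :: "('k::comm_ring_1 \<Rightarrow> 'm::ab_group_add \<Rightarrow> 'm) \<Rightarrow>
    ('k \<Rightarrow> 'n::ab_group_add \<Rightarrow> 'n) \<Rightarrow> ('k \<Rightarrow> 'p::ab_group_add \<Rightarrow> 'p) \<Rightarrow>
    (('m \<times> 'n \<times> 'p) \<Rightarrow> 'k) set" where
  "gen3 sM sN sP =
     {dlt (m + m', n, p) - dlt (m, n, p) - dlt (m', n, p) | m m' n p. True} \<union>
     {dlt (m, n + n', p) - dlt (m, n, p) - dlt (m, n', p) | m n n' p. True} \<union>
     {dlt (m, n, p + p') - dlt (m, n, p) - dlt (m, n, p') | m n p p'. True} \<union>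
     {dlt (sM c m, n, p) - fscale c (dlt (m, n, p)) | c m n p. True} \<union>
     {dlt (m, sN c n, p) - fscale c (dlt (m, n, p)) | c m n p. True} \<union>
     {dlt (m, n, sP c p) - fscale c (dlt (m, n, p)) | c m n p. True}"

definition teq3 :: "('k::comm_ring_1 \<Rightarrow> 'm::ab_group_add \<Rightarrow> 'm) \<Rightarrow>
    ('k \<Rightarrow> 'n::ab_group_add \<Rightarrow> 'n) \<Rightarrow> ('k \<Rightarrow> 'p::ab_group_add \<Rightarrow> 'p) \<Rightarrow>
    ('m \<times> 'n \<times> 'p) list \<Rightarrow> ('m \<times> 'n \<times> 'p) list \<Rightarrow> bool" where
  "teq3 sM sN sP xs ys \<longleftrightarrow>
     (fs xs - fs ys :: ('m \<times> 'n \<times> 'p) \<Rightarrow> 'k) \<in> module.span fscale (gen3 sM sN sP)"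

definition kalg :: "('k::comm_ring_1 \<Rightarrow> 'r::ring_1 \<Rightarrow> 'r) \<Rightarrow> bool" where
  "kalg sc \<longleftrightarrow> module sc \<and> (\<forall>c x y. sc c (x * y) = sc c x * y \<and> sc c (x * y) = x * sc c y)"

definition cop2 :: "('h \<Rightarrow> ('h \<times> 'h) list) \<Rightarrow> 'h \<Rightarrow> ('h \<times> 'h \<times> 'h) list" where
  "cop2 \<Delta> h = concat (map (\<lambda>(a, b). map (\<lambda>(a1, a2). (a1, a2, b)) (\<Delta> a)) (\<Delta> h))"

definition hopf_algebra :: "('k::comm_ring_1 \<Rightarrow> 'h::ring_1 \<Rightarrow> 'h) \<Rightarrow>
    ('h \<Rightarrow> ('h \<times> 'h) list) \<Rightarrow> ('h \<Rightarrow> 'k) \<Rightarrow> ('h \<Rightarrow> 'h) \<Rightarrow> bool" where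
  "hopf_algebra sc \<Delta> \<epsilon> S \<longleftrightarrow>
     kalg sc \<and>
     \<comment> \<open>Delta is k-linear H -> H (x) H\<close>
     (\<forall>x y. teq2 sc sc (\<Delta> (x + y)) (\<Delta> x @ \<Delta> y)) \<and>
     (\<forall>c x. teq2 sc sc (\<Delta> (sc c x)) (map (\<lambda>(a, b). (sc c a, b)) (\<Delta> x))) \<and>
     \<comment> \<open>coassociativity\<close>
     (\<forall>h. teq3 sc sc sc (cop2 \<Delta> h)
            (concat (map (\<lambda>(a, b). map (\<lambda>(b1, b2). (a, b1, b2)) (\<Delta> b)) (\<Delta> h)))) \<and>
     \<comment> \<open>counit\<close>
     module_hom sc (\<lambda>c x. c * x) \<epsilon> \<and>
     (\<forall>h. sum_list (map (\<lambda>(a, b). sc (\<epsilon> a) b) (\<Delta> h)) = h) \<and>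
     (\<forall>h. sum_list (map (\<lambda>(a, b). sc (\<epsilon> b) a) (\<Delta> h)) = h) \<and>
     \<comment> \<open>Delta and epsilon are algebra maps\<close>
     (\<forall>x y. teq2 sc sc (\<Delta> (x * y))
        (concat (map (\<lambda>(a, b). map (\<lambda>(a', b'). (a * a', b * b')) (\<Delta> y)) (\<Delta> x)))) \<and>
     teq2 sc sc (\<Delta> 1) [(1, 1)] \<and>
     (\<forall>x y. \<epsilon> (x * y) = \<epsilon> x * \<epsilon> y) \<and> \<epsilon> 1 = 1 \<and>
     \<comment> \<open>antipode\<close>
     module_hom sc sc S \<and>
     (\<forall>h. sum_list (map (\<lambda>(a, b). S a * b) (\<Delta> h)) = sc (\<epsilon> h) 1) \<and>
     (\<forall>h. sum_list (map (\<lambda>(a, b). a * S b) (\<Delta> h)) = sc (\<epsilon> h) 1)"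

definition comodule_algebra :: "('k::comm_ring_1 \<Rightarrow> 'h::ring_1 \<Rightarrow> 'h) \<Rightarrow>
    ('h \<Rightarrow> ('h \<times> 'h) list) \<Rightarrow> ('h \<Rightarrow> 'k) \<Rightarrow>
    ('k \<Rightarrow> 'a::ring_1 \<Rightarrow> 'a) \<Rightarrow> ('a \<Rightarrow> ('a \<times> 'h) list) \<Rightarrow> bool" where
  "comodule_algebra sc \<Delta> \<epsilon> scA \<rho> \<longleftrightarrow>
     kalg scA \<and>
     (\<forall>x y. teq2 scA sc (\<rho> (x + y)) (\<rho> x @ \<rho> y)) \<and>
     (\<forall>c x. teq2 scA sc (\<rho> (scA c x)) (map (\<lambda>(a, b). (scA c a, b)) (\<rho> x))) \<and>
     (\<forall>x. teq3 scA sc sc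
        (concat (map (\<lambda>(a, b). map (\<lambda>(a0, a1). (a0, a1, b)) (\<rho> a)) (\<rho> x)))
        (concat (map (\<lambda>(a, b). map (\<lambda>(b1, b2). (a, b1, b2)) (\<Delta> b)) (\<rho> x)))) \<and>
     (\<forall>x. sum_list (map (\<lambda>(a, b). scA (\<epsilon> b) a) (\<rho> x)) = x) \<and>
     (\<forall>x y. teq2 scA sc (\<rho> (x * y))
        (concat (map (\<lambda>(a, b). map (\<lambda>(a', b'). (a * a', b * b')) (\<rho> y)) (\<rho> x)))) \<and>
     teq2 scA sc (\<rho> 1) [(1, 1)]"

datatype obj = One | Two

definition conv :: "('h \<Rightarrow> ('h \<times> 'h) list) \<Rightarrow> ('h \<Rightarrow> 'a::ring_1) \<Rightarrow> ('h \<Rightarrow> 'a) \<Rightarrow> 'h \<Rightarrow> 'a" where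
  "conv \<Delta> g f h = sum_list (map (\<lambda>(a, b). g a * f b) (\<Delta> h))"

definition conv' :: "('h \<Rightarrow> ('h \<times> 'h) list) \<Rightarrow> ('h \<Rightarrow> 'a::ring_1) \<Rightarrow> ('h \<Rightarrow> 'a) \<Rightarrow> 'h \<Rightarrow> 'a" where
  "conv' \<Delta> g f h = sum_list (map (\<lambda>(a, b). g b * f a) (\<Delta> h))"

definition cid :: "('h \<Rightarrow> 'k::comm_ring_1) \<Rightarrow> ('k \<Rightarrow> 'a::ring_1 \<Rightarrow> 'a) \<Rightarrow> 'h \<Rightarrow> 'a" where
  "cid \<epsilon> scA h = scA (\<epsilon> h) 1"

text \<open>CA ... i j is the set of morphisms from object i to object j in C_A.\<close>
fun CA :: "('k::comm_ring_1 \<Rightarrow> 'h::ring_1 \<Rightarrow> 'h) \<Rightarrow> ('h \<Rightarrow> ('h \<times> 'h) list) \<Rightarrow> ('h \<Rightarrow> 'h) \<Rightarrow>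
    ('k \<Rightarrow> 'a::ring_1 \<Rightarrow> 'a) \<Rightarrow> ('a \<Rightarrow> ('a \<times> 'h) list) \<Rightarrow> obj \<Rightarrow> obj \<Rightarrow> ('h \<Rightarrow> 'a) set" where
  "CA sc \<Delta> S scA \<rho> One One =
     {v. module_hom sc scA v \<and> (\<forall>h. teq2 scA sc (\<rho> (v h)) [(v h, 1)])}"
| "CA sc \<Delta> S scA \<rho> Two One =
     {t. module_hom sc scA t \<and> (\<forall>h. teq2 scA sc (\<rho> (t h)) (map (\<lambda>(a, b). (t a, b)) (\<Delta> h)))}"
| "CA sc \<Delta> S scA \<rho> One Two =
     {u. module_hom sc scA u \<and> (\<forall>h. teq2 scA sc (\<rho> (u h)) (map (\<lambda>(a, b). (u b, S a)) (\<Delta> h)))}"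
| "CA sc \<Delta> S scA \<rho> Two Two =
     {w. module_hom sc scA w \<and>
         (\<forall>h. teq2 scA sc (\<rho> (w h)) (map (\<lambda>(a1, a2, a3). (w a2, S a1 * a3)) (cop2 \<Delta> h)))}"

text \<open>CA' ... i j is the set of morphisms from object i to object j in C'_A.\<close>
fun CA' :: "('k::comm_ring_1 \<Rightarrow> 'h::ring_1 \<Rightarrow> 'h) \<Rightarrow> ('h \<Rightarrow> ('h \<times> 'h) list) \<Rightarrow> ('h \<Rightarrow> 'h) \<Rightarrow>
    ('k \<Rightarrow> 'a::ring_1 \<Rightarrow> 'a) \<Rightarrow> ('a \<Rightarrow> ('a \<times> 'h) list) \<Rightarrow> obj \<Rightarrow> obj \<Rightarrow> ('h \<Rightarrow> 'a) set" where
  "CA' sc \<Delta> Sbar scA \<rho> One One =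
     {v. module_hom sc scA v \<and> (\<forall>h. teq2 scA sc (\<rho> (v h)) [(v h, 1)])}"
| "CA' sc \<Delta> Sbar scA \<rho> One Two =
     {t. module_hom sc scA t \<and> (\<forall>h. teq2 scA sc (\<rho> (t h)) (map (\<lambda>(a, b). (t a, b)) (\<Delta> h)))}"
| "CA' sc \<Delta> Sbar scA \<rho> Two One =
     {u. module_hom sc scA u \<and> (\<forall>h. teq2 scA sc (\<rho> (u h)) (map (\<lambda>(a, b). (u b, Sbar a)) (\<Delta> h)))}"
| "CA' sc \<Delta> Sbar scA \<rho> Two Two =
     {w. module_hom sc scA w \<and>
         (\<forall>h. teq2 scA sc (\<rho> (w h)) (map (\<lambda>(a1, a2, a3). (w a2, a3 * Sbar a1)) (cop2 \<Delta> h)))}"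

end

theory Submission
  imports Defs
begin


definition supp :: "('x \<Rightarrow> 'k::comm_ring_1) \<Rightarrow> 'x set" where "supp F = {x. F x \<noteq> 0}"
definition lin :: "('k::comm_ring_1 \<Rightarrow> 'b::ab_group_add \<Rightarrow> 'b) \<Rightarrow> ('x \<Rightarrow> 'b) \<Rightarrow> ('x \<Rightarrow> 'k) \<Rightarrow> 'b"
  where "lin s \<Phi> F = (\<Sum>x\<in>supp F. s (F x) (\<Phi> x))"

lemma module_fscale: "module (fscale :: 'k::comm_ring_1 \<Rightarrow> ('x \<Rightarrow> 'k) \<Rightarrow> _)"
  by unfold_locales (auto simp: fscale_def fun_eq_iff algebra_simps)

lemma lin_superset:
  assumes "module s" "finite X" "supp F \<subseteq> X"
  shows "lin s \<Phi> F = (\<Sum>x\<in>X. s (F x) (\<Phi> x))"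
  unfolding lin_def
  by (rule sum.mono_neutral_left) (use assms in \<open>auto simp: supp_def module.scale_zero_left\<close>)

lemma supp_add: "supp (F + G) \<subseteq> supp F \<union> supp G" by (auto simp: supp_def)
lemma supp_minus: "supp (- F) = supp F" by (auto simp: supp_def)
lemma supp_fscale: "supp (fscale c F) \<subseteq> supp F" by (auto simp: supp_def fscale_def)
lemma supp_dlt: "supp (dlt x :: _ \<Rightarrow> 'k::comm_ring_1) = {x}" by (auto simp: supp_def dlt_def)
lemma supp_zero: "supp 0 = {}" by (auto simp: supp_def)

lemma lin_add:
  assumes "module s" "finite (supp F)" "finite (supp G)"
  shows "lin s \<Phi> (F + G) = lin s \<Phi> F + lin s \<Phi> G"
proof -
  let ?X = "supp F \<union> supp G"
  have "lin s \<Phi> (F + G) = (\<Sum>x\<in>?X. s ((F + G) x) (\<Phi> x))"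
    by (rule lin_superset[OF assms(1)]) (use assms supp_add[of F G] in auto)
  also have "\<dots> = (\<Sum>x\<in>?X. s (F x) (\<Phi> x)) + (\<Sum>x\<in>?X. s (G x) (\<Phi> x))"
    by (simp only: plus_fun_apply module.scale_left_distrib[OF assms(1)] sum.distrib)
  also have "\<dots> = lin s \<Phi> F + lin s \<Phi> G"
    using lin_superset[OF assms(1), of ?X] assms by auto
  finally show ?thesis .
qed

lemma lin_scale:
  assumes "module s" "finite (supp F)"
  shows "lin s \<Phi> (fscale c F) = s c (lin s \<Phi> F)"
proof -
  have "lin s \<Phi> (fscale c F) = (\<Sum>x\<in>supp F. s (fscale c F x) (\<Phi> x))"
    by (rule lin_superset[OF assms(1)]) (use assms supp_fscale[of c F] in auto)
  also have "\<dots> = s c (lin s \<Phi> F)"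
    by (simp add: fscale_def lin_def module.scale_sum_right[OF assms(1)] module.scale_scale[OF assms(1)])
  finally show ?thesis .
qed

lemma lin_minus:
  assumes "module s" "finite (supp F)"
  shows "lin s \<Phi> (- F) = - lin s \<Phi> F"
proof -
  have "- F = fscale (-1) F" by (auto simp: fscale_def fun_eq_iff)
  thus ?thesis using lin_scale[OF assms, of \<Phi> "-1"]
    by (simp add: module.scale_minus_left[OF assms(1)] module.scale_one[OF assms(1)])
qed

lemma lin_diff:
  assumes "module s" "finite (supp F)" "finite (supp G)"
  shows "lin s \<Phi> (F - G) = lin s \<Phi> F - lin s \<Phi> G"
  using lin_add[OF assms(1,2), of "-G"] lin_minus[OF assms(1,3)] assms(3)
  by (simp add: supp_minus)

lemma lin_dlt: "module s \<Longrightarrow> lin s \<Phi> (dlt x) = \<Phi> x"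
  unfolding lin_def supp_dlt by (simp add: dlt_def module.scale_one)

lemma fs_Nil: "fs [] = 0" by (simp add: fs_def fun_eq_iff)
lemma fs_Cons: "fs (x # xs) = dlt x + fs xs"
  by (simp add: fs_def dlt_def fun_eq_iff)
lemma fs_append: "fs (xs @ ys) = fs xs + fs ys"
  by (simp add: fs_def fun_eq_iff)
lemma fs_concat: "fs (concat (map G xs)) = sum_list (map (\<lambda>x. fs (G x)) xs)"
  by (induction xs) (auto simp: fs_Nil fs_append)

lemma finite_supp_dlt: "finite (supp (dlt x :: _ \<Rightarrow> 'k::comm_ring_1))" by (simp add: supp_dlt)
lemma finite_supp_add: "finite (supp F) \<Longrightarrow> finite (supp G) \<Longrightarrow> finite (supp (F + G))"
  by (meson finite_UnI finite_subset supp_add)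
lemma finite_supp_diff: "finite (supp F) \<Longrightarrow> finite (supp G) \<Longrightarrow> finite (supp (F - G))"
  using finite_supp_add[of F "-G"] by (simp add: supp_minus)
lemma finite_supp_fscale: "finite (supp F) \<Longrightarrow> finite (supp (fscale c F))"
  by (meson finite_subset supp_fscale)
lemma finite_supp_fs: "finite (supp (fs xs :: _ \<Rightarrow> 'k::comm_ring_1))"
proof (induction xs)
  case Nil show ?case unfolding fs_Nil supp_zero by simp
next
  case (Cons a xs) show ?case unfolding fs_Cons by (rule finite_supp_add[OF finite_supp_dlt Cons])
qed

lemma lin_fs: "module s \<Longrightarrow> lin s \<Phi> (fs xs) = sum_list (map \<Phi> xs)"
proof (induction xs)
  case Nil show ?case unfolding fs_Nil lin_def supp_zero by simp
next
  case (Cons a xs) thus ?case unfolding fs_Cons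
    by (simp only: lin_add[OF _ finite_supp_dlt finite_supp_fs] lin_dlt list.map sum_list.Cons)
qed

lemma lin_span:
  assumes s: "module s" and N: "module.subspace s N"
    and R: "\<forall>r\<in>R. finite (supp r) \<and> lin s \<Phi> r \<in> N"
    and F: "F \<in> module.span fscale R"
  shows "finite (supp F) \<and> lin s \<Phi> F \<in> N"
proof -
  have sub: "module.subspace fscale (Collect (\<lambda>F. finite (supp F) \<and> lin s \<Phi> F \<in> N))"
    unfolding module.subspace_def[OF module_fscale]
  proof (intro conjI ballI allI)
    show "0 \<in> Collect (\<lambda>F. finite (supp F) \<and> lin s \<Phi> F \<in> N)"
      using module.subspace_0[OF s N] by (simp add: supp_zero lin_def)
  next
    fix x y assume x: "x \<in> Collect (\<lambda>F. finite (supp F) \<and> lin s \<Phi> F \<in> N)"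
      and y: "y \<in> Collect (\<lambda>F. finite (supp F) \<and> lin s \<Phi> F \<in> N)"
    have e: "lin s \<Phi> (x + y) = lin s \<Phi> x + lin s \<Phi> y" by (rule lin_add[OF s]) (use x y in auto)
    show "x + y \<in> Collect (\<lambda>F. finite (supp F) \<and> lin s \<Phi> F \<in> N)"
      unfolding mem_Collect_eq e using x y by (intro conjI finite_supp_add module.subspace_add[OF s N]) auto
  next
    fix c x assume x: "x \<in> Collect (\<lambda>F. finite (supp F) \<and> lin s \<Phi> F \<in> N)"
    have e: "lin s \<Phi> (fscale c x) = s c (lin s \<Phi> x)" by (rule lin_scale[OF s]) (use x in auto)
    show "fscale c x \<in> Collect (\<lambda>F. finite (supp F) \<and> lin s \<Phi> F \<in> N)"
      unfolding mem_Collect_eq e using x by (intro conjI finite_supp_fscale module.subspace_scale[OF s N]) auto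
  qed
  show ?thesis by (rule module.span_induct[OF module_fscale F sub]) (use R in auto)
qed

definition teqR :: "(('x \<Rightarrow> 'k::comm_ring_1) set) \<Rightarrow> 'x list \<Rightarrow> 'x list \<Rightarrow> bool" where
  "teqR R xs ys \<longleftrightarrow> (fs xs - fs ys :: 'x \<Rightarrow> 'k) \<in> module.span fscale R"

lemma teq2_teqR: "teq2 sM sN = teqR (gen2 sM sN)"
  by (simp add: fun_eq_iff teq2_def teqR_def)
lemma teq3_teqR: "teq3 sM sN sP = teqR (gen3 sM sN sP)"
  by (simp add: fun_eq_iff teq3_def teqR_def)

lemma teqR_sum:
  assumes s: "module s" and N: "module.subspace s N"
    and R: "\<forall>r\<in>R. finite (supp r) \<and> lin s \<Phi> r \<in> N"
    and t: "teqR R xs ys"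
  shows "sum_list (map \<Phi> xs) - sum_list (map \<Phi> ys) \<in> N"
proof -
  have "lin s \<Phi> (fs xs - fs ys) \<in> N" using lin_span[OF s N R] t by (auto simp: teqR_def)
  thus ?thesis by (simp add: lin_diff[OF s] finite_supp_fs lin_fs[OF s])
qed

lemma teqR_concat:
  assumes R: "\<forall>r\<in>R. finite (supp r) \<and> lin fscale (\<lambda>x. fs (G x)) r \<in> module.span fscale R'"
    and t: "teqR R xs ys"
  shows "teqR R' (concat (map G xs)) (concat (map G ys))"
  using teqR_sum[OF module_fscale module.subspace_span[OF module_fscale] R t]
  by (simp add: teqR_def fs_concat)


lemma lin_d3:
  assumes "module s"
  shows "lin s \<Phi> (dlt a - dlt b - dlt c) = \<Phi> a - \<Phi> b - \<Phi> c"
  using assms by (simp add: lin_diff finite_supp_diff finite_supp_dlt lin_dlt)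

lemma lin_dsc:
  assumes "module s"
  shows "lin s \<Phi> (dlt a - fscale c (dlt b)) = \<Phi> a - s c (\<Phi> b)"
  using assms by (simp add: lin_diff finite_supp_fscale finite_supp_dlt lin_dlt lin_scale)

lemma fin_d3: "finite (supp (dlt a - dlt b - dlt c :: _ \<Rightarrow> 'k::comm_ring_1))"
  by (simp add: finite_supp_diff finite_supp_dlt)
lemma fin_dsc: "finite (supp (dlt a - fscale c (dlt b) :: _ \<Rightarrow> 'k::comm_ring_1))"
  by (simp add: finite_supp_diff finite_supp_fscale finite_supp_dlt)

definition bil2 :: "('k::comm_ring_1 \<Rightarrow> 'b::ab_group_add \<Rightarrow> 'b) \<Rightarrow> ('k \<Rightarrow> 'm::ab_group_add \<Rightarrow> 'm) \<Rightarrow>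
    ('k \<Rightarrow> 'n::ab_group_add \<Rightarrow> 'n) \<Rightarrow> ('m \<times> 'n \<Rightarrow> 'b) \<Rightarrow> 'b set \<Rightarrow> bool" where
  "bil2 s sM sN \<Phi> N \<longleftrightarrow>
    (\<forall>m m' n. \<Phi> (m + m', n) - \<Phi> (m, n) - \<Phi> (m', n) \<in> N) \<and>
    (\<forall>m n n'. \<Phi> (m, n + n') - \<Phi> (m, n) - \<Phi> (m, n') \<in> N) \<and>
    (\<forall>c m n. \<Phi> (sM c m, n) - s c (\<Phi> (m, n)) \<in> N) \<and>
    (\<forall>c m n. \<Phi> (m, sN c n) - s c (\<Phi> (m, n)) \<in> N)"

definition bil3 :: "('k::comm_ring_1 \<Rightarrow> 'b::ab_group_add \<Rightarrow> 'b) \<Rightarrow> ('k \<Rightarrow> 'm::ab_group_add \<Rightarrow> 'm) \<Rightarrow>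
    ('k \<Rightarrow> 'n::ab_group_add \<Rightarrow> 'n) \<Rightarrow> ('k \<Rightarrow> 'p::ab_group_add \<Rightarrow> 'p) \<Rightarrow> ('m \<times> 'n \<times> 'p \<Rightarrow> 'b) \<Rightarrow> 'b set \<Rightarrow> bool" where
  "bil3 s sM sN sP \<Phi> N \<longleftrightarrow>
    (\<forall>m m' n p. \<Phi> (m + m', n, p) - \<Phi> (m, n, p) - \<Phi> (m', n, p) \<in> N) \<and>
    (\<forall>m n n' p. \<Phi> (m, n + n', p) - \<Phi> (m, n, p) - \<Phi> (m, n', p) \<in> N) \<and>
    (\<forall>m n p p'. \<Phi> (m, n, p + p') - \<Phi> (m, n, p) - \<Phi> (m, n, p') \<in> N) \<and>
    (\<forall>c m n p. \<Phi> (sM c m, n, p) - s c (\<Phi> (m, n, p)) \<in> N) \<and>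
    (\<forall>c m n p. \<Phi> (m, sN c n, p) - s c (\<Phi> (m, n, p)) \<in> N) \<and>
    (\<forall>c m n p. \<Phi> (m, n, sP c p) - s c (\<Phi> (m, n, p)) \<in> N)"

lemma gen2_resp:
  assumes "module s" "bil2 s sM sN \<Phi> N"
  shows "\<forall>r\<in>gen2 sM sN. finite (supp r) \<and> lin s \<Phi> r \<in> N"
  using assms unfolding gen2_def bil2_def
  by (auto simp: lin_d3 lin_dsc fin_d3 fin_dsc)

lemma gen3_resp:
  assumes "module s" "bil3 s sM sN sP \<Phi> N"
  shows "\<forall>r\<in>gen3 sM sN sP. finite (supp r) \<and> lin s \<Phi> r \<in> N"
  using assms unfolding gen3_def bil3_def
  by (auto simp: lin_d3 lin_dsc fin_d3 fin_dsc)

lemma KE2: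
  assumes "module s" "bil2 s sM sN \<Phi> {0}" "teq2 sM sN xs ys"
  shows "sum_list (map \<Phi> xs) = sum_list (map \<Phi> ys)"
  using teqR_sum[OF assms(1) module.subspace_single_0[OF assms(1)] gen2_resp[OF assms(1,2)]] assms(3)
  by (simp add: teq2_teqR)

lemma K2:
  assumes "bil2 fscale sM sN (\<lambda>p. fs (G p)) (module.span fscale R)" "teq2 sM sN xs ys"
  shows "teqR R (concat (map G xs)) (concat (map G ys))"
  by (rule teqR_concat[OF gen2_resp[OF module_fscale assms(1)]]) (use assms(2) in \<open>simp add: teq2_teqR\<close>)

lemma K3:
  assumes "bil3 fscale sM sN sP (\<lambda>p. fs (G p)) (module.span fscale R)" "teq3 sM sN sP xs ys"
  shows "teqR R (concat (map G xs)) (concat (map G ys))"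
  by (rule teqR_concat[OF gen3_resp[OF module_fscale assms(1)]]) (use assms(2) in \<open>simp add: teq3_teqR\<close>)

lemma KE3:
  assumes "module s" "bil3 s sM sN sP \<Phi> {0}" "teq3 sM sN sP xs ys"
  shows "sum_list (map \<Phi> xs) = sum_list (map \<Phi> ys)"
  using teqR_sum[OF assms(1) module.subspace_single_0[OF assms(1)] gen3_resp[OF assms(1,2)]] assms(3)
  by (simp add: teq3_teqR)

abbreviation "sp \<equiv> module.span fscale"

lemma sp_add: "x \<in> sp R \<Longrightarrow> y \<in> sp R \<Longrightarrow> x + y \<in> sp R"
  by (rule module.span_add[OF module_fscale])
lemma sp_diff: "x \<in> sp R \<Longrightarrow> y \<in> sp R \<Longrightarrow> x - y \<in> sp R"
  by (rule module.span_diff[OF module_fscale])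
lemma sp_neg: "x \<in> sp R \<Longrightarrow> - x \<in> sp R"
  by (rule module.span_neg[OF module_fscale])
lemma sp_scale: "x \<in> sp R \<Longrightarrow> fscale c x \<in> sp R"
  by (rule module.span_scale[OF module_fscale])
lemma sp_zero: "0 \<in> sp R"
  by (rule module.span_zero[OF module_fscale])
lemma sp_base: "x \<in> R \<Longrightarrow> x \<in> sp R"
  by (rule module.span_base[OF module_fscale])

lemma teqR_refl: "teqR R xs xs" by (simp add: teqR_def sp_zero)
lemma teqR_fs: assumes "(fs xs :: 'x \<Rightarrow> 'k) = fs ys" shows "teqR (R :: ('x \<Rightarrow> 'k::comm_ring_1) set) xs ys" unfolding teqR_def assms diff_self by (rule sp_zero)
lemma teqR_sym: "teqR R xs ys \<Longrightarrow> teqR R ys xs"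
  unfolding teqR_def by (drule sp_neg) simp
lemma teqR_trans: "teqR R xs ys \<Longrightarrow> teqR R ys zs \<Longrightarrow> teqR R xs zs"
  unfolding teqR_def by (drule (1) sp_add) simp
lemma teqR_app: "teqR R xs xs' \<Longrightarrow> teqR R ys ys' \<Longrightarrow> teqR R (xs @ ys) (xs' @ ys')"
  unfolding teqR_def fs_append by (drule (1) sp_add) (simp add: algebra_simps)
lemma teqR_concat_cong:
  "(\<And>x. x \<in> set xs \<Longrightarrow> teqR R (f x) (g x)) \<Longrightarrow> teqR R (concat (map f xs)) (concat (map g xs))"
  by (induction xs) (auto simp: teqR_refl intro: teqR_app)
lemma teqR_app_comm: "teqR R (xs @ ys) (ys @ xs)"
  by (rule teqR_fs) (simp add: fs_append add.commute)

lemma fs_single: "fs [x] = dlt x" by (simp add: fs_Cons fs_Nil)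

lemma teqR_fsdiff: "fs xs - fs ys \<in> sp R \<Longrightarrow> teqR R xs ys" by (simp add: teqR_def)

lemma g2a: "dlt (x + x', y) - dlt (x, y) - dlt (x', y) \<in> sp (gen2 tM tN)"
  by (rule sp_base) (unfold gen2_def, blast)
lemma g2b: "dlt (x, y + y') - dlt (x, y) - dlt (x, y') \<in> sp (gen2 tM tN)"
  by (rule sp_base) (unfold gen2_def, blast)
lemma g2c: "dlt (tM c x, y) - fscale c (dlt (x, y)) \<in> sp (gen2 tM tN)"
  by (rule sp_base) (unfold gen2_def, blast)
lemma g2d: "dlt (x, tN c y) - fscale c (dlt (x, y)) \<in> sp (gen2 tM tN)"
  by (rule sp_base) (unfold gen2_def, blast)
lemma g3a: "dlt (x + x', y, z) - dlt (x, y, z) - dlt (x', y, z) \<in> sp (gen3 tM tN tP)"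
  by (rule sp_base) (unfold gen3_def, (rule UnI1)+, blast)
lemma g3b: "dlt (x, y + y', z) - dlt (x, y, z) - dlt (x, y', z) \<in> sp (gen3 tM tN tP)"
  by (rule sp_base) (unfold gen3_def, rule UnI1, rule UnI1, rule UnI1, rule UnI1, rule UnI2, blast)
lemma g3c: "dlt (x, y, z + z') - dlt (x, y, z) - dlt (x, y, z') \<in> sp (gen3 tM tN tP)"
  by (rule sp_base) (unfold gen3_def, rule UnI1, rule UnI1, rule UnI1, rule UnI2, blast)
lemma g3d: "dlt (tM c x, y, z) - fscale c (dlt (x, y, z)) \<in> sp (gen3 tM tN tP)"
  by (rule sp_base) (unfold gen3_def, rule UnI1, rule UnI1, rule UnI2, blast)
lemma g3e: "dlt (x, tN c y, z) - fscale c (dlt (x, y, z)) \<in> sp (gen3 tM tN tP)"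
  by (rule sp_base) (unfold gen3_def, rule UnI1, rule UnI2, blast)
lemma g3f: "dlt (x, y, tP c z) - fscale c (dlt (x, y, z)) \<in> sp (gen3 tM tN tP)"
  by (rule sp_base) (unfold gen3_def, rule UnI2, blast)

lemma fscale_add: "fscale c (F + G) = fscale c F + fscale c G"
  by (simp add: fscale_def fun_eq_iff algebra_simps)
lemma fscale_diff: "fscale c (F - G) = fscale c F - fscale c G"
  by (simp add: fscale_def fun_eq_iff algebra_simps)
lemma fscale_zero: "fscale c 0 = 0"
  by (simp add: fscale_def fun_eq_iff)

lemma map_sp3:
  assumes "\<And>y. y \<in> set ys \<Longrightarrow> dlt (f y) - dlt (g y) - dlt (h y) \<in> sp R"
  shows "fs (map f ys) - fs (map g ys) - fs (map h ys) \<in> sp R"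
  using assms
proof (induction ys)
  case Nil show ?case by (simp only: list.map fs_Nil diff_self sp_zero)
next
  case (Cons y ys)
  have eq: "fs (map f (y#ys)) - fs (map g (y#ys)) - fs (map h (y#ys)) =
     (dlt (f y) - dlt (g y) - dlt (h y)) + (fs (map f ys) - fs (map g ys) - fs (map h ys))"
    by (simp add: fs_Cons algebra_simps)
  show ?case unfolding eq by (intro sp_add Cons.prems Cons.IH) auto
qed

lemma map_spsc:
  assumes "\<And>y. y \<in> set ys \<Longrightarrow> dlt (f y) - fscale c (dlt (g y)) \<in> sp R"
  shows "fs (map f ys) - fscale c (fs (map g ys)) \<in> sp R"
  using assms
proof (induction ys)
  case Nil show ?case by (simp only: list.map fs_Nil fscale_zero diff_self sp_zero)
next
  case (Cons y ys)
  have eq: "fs (map f (y#ys)) - fscale c (fs (map g (y#ys))) =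
     (dlt (f y) - fscale c (dlt (g y))) + (fs (map f ys) - fscale c (fs (map g ys)))"
    by (simp add: fs_Cons fscale_add algebra_simps)
  show ?case unfolding eq by (intro sp_add Cons.prems Cons.IH) auto
qed

lemma map_sp2:
  assumes "\<And>y. y \<in> set ys \<Longrightarrow> dlt (f y) - dlt (g y) \<in> sp R"
  shows "teqR R (map f ys) (map g ys)"
  unfolding teqR_def using assms
proof (induction ys)
  case Nil show ?case by (simp only: list.map fs_Nil diff_self sp_zero)
next
  case (Cons y ys)
  have eq: "fs (map f (y#ys)) - fs (map g (y#ys)) =
     (dlt (f y) - dlt (g y)) + (fs (map f ys) - fs (map g ys))"
    by (simp add: fs_Cons algebra_simps)
  show ?case unfolding eq by (intro sp_add Cons.prems Cons.IH) auto
qed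

definition sclL :: "('k \<Rightarrow> 'm \<Rightarrow> 'm) \<Rightarrow> 'k \<Rightarrow> ('m \<times> 'r) list \<Rightarrow> ('m \<times> 'r) list" where
  "sclL t c xs = map (\<lambda>(a, b). (t c a, b)) xs"

lemma sclL_fs2: "fs (sclL tM c xs) - fscale c (fs xs) \<in> sp (gen2 tM tN)"
proof -
  have "fs (map (\<lambda>(a, b). (tM c a, b)) xs) - fscale c (fs (map id xs)) \<in> sp (gen2 tM tN)"
    by (rule map_spsc) (auto simp: g2c split: prod.splits)
  thus ?thesis by (simp add: sclL_def)
qed

lemma sclL_fs3: "fs (sclL tM c xs) - fscale c (fs xs) \<in> sp (gen3 tM tN tP)"
proof -
  have "fs (map (\<lambda>(a, b). (tM c a, b)) xs) - fscale c (fs (map id xs)) \<in> sp (gen3 tM tN tP)"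
    by (rule map_spsc) (auto simp: g3d split: prod.splits)
  thus ?thesis by (simp add: sclL_def)
qed

lemma teqR_scl_cong:
  assumes "fs (sclL t c xs) - fscale c (fs xs) \<in> sp R" "fs (sclL t c ys) - fscale c (fs ys) \<in> sp R"
    "teqR R xs ys"
  shows "teqR R (sclL t c xs) (sclL t c ys)"
proof -
  have "fs (sclL t c xs) - fs (sclL t c ys) =
    (fs (sclL t c xs) - fscale c (fs xs)) - (fs (sclL t c ys) - fscale c (fs ys)) + fscale c (fs xs - fs ys)"
    by (simp add: fscale_diff)
  thus ?thesis using assms unfolding teqR_def by (metis sp_add sp_diff sp_scale)
qed


lemma g2a': "u = (x + x', y) \<Longrightarrow> v = (x, y) \<Longrightarrow> w = (x', y) \<Longrightarrow> dlt u - dlt v - dlt w \<in> sp (gen2 tM tN)"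
  using g2a by blast
lemma g2b': "u = (x, y + y') \<Longrightarrow> v = (x, y) \<Longrightarrow> w = (x, y') \<Longrightarrow> dlt u - dlt v - dlt w \<in> sp (gen2 tM tN)"
  using g2b by blast
lemma g2c': "u = (tM c x, y) \<Longrightarrow> v = (x, y) \<Longrightarrow> dlt u - fscale c (dlt v) \<in> sp (gen2 tM tN)"
  using g2c by blast
lemma g2d': "u = (x, tN c y) \<Longrightarrow> v = (x, y) \<Longrightarrow> dlt u - fscale c (dlt v) \<in> sp (gen2 tM tN)"
  using g2d by blast
lemma g3a': "u = (x + x', y, z) \<Longrightarrow> v = (x, y, z) \<Longrightarrow> w = (x', y, z) \<Longrightarrow> dlt u - dlt v - dlt w \<in> sp (gen3 tM tN tP)"
  using g3a by blast
lemma g3b': "u = (x, y + y', z) \<Longrightarrow> v = (x, y, z) \<Longrightarrow> w = (x, y', z) \<Longrightarrow> dlt u - dlt v - dlt w \<in> sp (gen3 tM tN tP)"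
  using g3b by blast
lemma g3c': "u = (x, y, z + z') \<Longrightarrow> v = (x, y, z) \<Longrightarrow> w = (x, y, z') \<Longrightarrow> dlt u - dlt v - dlt w \<in> sp (gen3 tM tN tP)"
  using g3c by blast
lemma g3d': "u = (tM c x, y, z) \<Longrightarrow> v = (x, y, z) \<Longrightarrow> dlt u - fscale c (dlt v) \<in> sp (gen3 tM tN tP)"
  using g3d by blast
lemma g3e': "u = (x, tN c y, z) \<Longrightarrow> v = (x, y, z) \<Longrightarrow> dlt u - fscale c (dlt v) \<in> sp (gen3 tM tN tP)"
  using g3e by blast
lemma g3f': "u = (x, y, tP c z) \<Longrightarrow> v = (x, y, z) \<Longrightarrow> dlt u - fscale c (dlt v) \<in> sp (gen3 tM tN tP)"
  using g3f by blast

lemma concat_single: "concat (map (\<lambda>p. [\<phi> p]) xs) = map \<phi> xs"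
  by (induction xs) auto

lemma K2map:
  assumes "bil2 fscale sM sN (\<lambda>p. fs [\<phi> p]) (sp R)" "teq2 sM sN xs ys"
  shows "teqR R (map \<phi> xs) (map \<phi> ys)"
  using K2[OF assms] by (simp add: concat_single)

lemma K3map:
  assumes "bil3 fscale sM sN sP (\<lambda>p. fs [\<phi> p]) (sp R)" "teq3 sM sN sP xs ys"
  shows "teqR R (map \<phi> xs) (map \<phi> ys)"
  using K3[OF assms] by (simp add: concat_single)

lemma teqR_empty_of:
  assumes "teqR R (T0) (T0 @ T0)"
  shows "teqR R T0 []"
  using assms unfolding teqR_def fs_append fs_Nil by (simp, metis sp_neg minus_minus)

lemma teqR_diff3: "teqR R X (Y @ Z) \<Longrightarrow> fs X - fs Y - fs Z \<in> sp R"
  unfolding teqR_def fs_append by (simp add: diff_diff_eq)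

lemma teqR_diff3_inv: "fs X - fs Y - fs Z \<in> sp R \<Longrightarrow> teqR R X (Y @ Z)"
  unfolding teqR_def fs_append by (simp add: diff_diff_eq)

lemma teqR_sc_diff:
  assumes "teqR R X Y" "fs Y - fscale c (fs Z) \<in> sp R"
  shows "fs X - fscale c (fs Z) \<in> sp R"
proof -
  have "fs X - fscale c (fs Z) = (fs X - fs Y) + (fs Y - fscale c (fs Z))" by simp
  thus ?thesis using assms unfolding teqR_def by (metis sp_add)
qed

lemma mh_id: "module s \<Longrightarrow> module_hom s s id"
  by (simp add: module_hom_def module_hom_axioms_def)

lemma mh_comp: "module_hom s1 s2 f \<Longrightarrow> module_hom s2 s3 g \<Longrightarrow> module_hom s1 s3 (g \<circ> f)"
  by (simp add: module_hom_def module_hom_axioms_def)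

lemma bil2_str:
  assumes f: "module_hom sM tM f" and g: "module_hom sN tN g" and phi: "\<And>a b. \<phi> (a, b) = (f a, g b)"
  shows "bil2 fscale sM sN (\<lambda>p. fs [\<phi> p]) (sp (gen2 tM tN))"
  unfolding bil2_def fs_single phi
  by (intro conjI allI)
     (simp_all add: module_hom.add[OF f] module_hom.add[OF g] module_hom.scale[OF f] module_hom.scale[OF g] g2a g2b g2c g2d)

lemma bil2_swp:
  assumes f: "module_hom sN tM f" and g: "module_hom sM tN g" and phi: "\<And>a b. \<phi> (a, b) = (f b, g a)"
  shows "bil2 fscale sM sN (\<lambda>p. fs [\<phi> p]) (sp (gen2 tM tN))"
  unfolding bil2_def fs_single phi
  by (intro conjI allI)
     (simp_all add: module_hom.add[OF f] module_hom.add[OF g] module_hom.scale[OF f] module_hom.scale[OF g] g2a g2b g2c g2d)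




definition mult :: "('h::ring_1 \<times> 'h) list \<Rightarrow> ('h \<times> 'h) list \<Rightarrow> ('h \<times> 'h) list" where
  "mult xs ys = concat (map (\<lambda>(a, b). map (\<lambda>(a', b'). (a * a', b * b')) ys) xs)"

definition cop2' :: "('h \<Rightarrow> ('h \<times> 'h) list) \<Rightarrow> 'h \<Rightarrow> ('h \<times> 'h \<times> 'h) list" where
  "cop2' \<Delta> h = concat (map (\<lambda>(a, b). map (\<lambda>(b1, b2). (a, b1, b2)) (\<Delta> b)) (\<Delta> h))"

lemma sum_list_hom:
  assumes "\<And>x y. f (x + y) = f x + f y" "f 0 = 0"
  shows "f (sum_list (map g xs)) = sum_list (map (\<lambda>x. f (g x)) xs)"
  by (induction xs) (auto simp: assms)

lemma concat_concat_map: "concat (concat (map f xs)) = concat (map (\<lambda>x. concat (f x)) xs)"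
  by (induction xs) auto

locale HC =
  fixes sc :: "'k::comm_ring_1 \<Rightarrow> 'h::ring_1 \<Rightarrow> 'h"
    and \<Delta> :: "'h \<Rightarrow> ('h \<times> 'h) list" and \<epsilon> :: "'h \<Rightarrow> 'k"
    and S Sbar :: "'h \<Rightarrow> 'h"
    and scA :: "'k \<Rightarrow> 'a::ring_1 \<Rightarrow> 'a" and \<rho> :: "'a \<Rightarrow> ('a \<times> 'h) list"
  assumes hopf: "hopf_algebra sc \<Delta> \<epsilon> S"
    and SS: "\<And>h. S (Sbar h) = h" and SbS: "\<And>h. Sbar (S h) = h"
    and comod: "comodule_algebra sc \<Delta> \<epsilon> scA \<rho>"
begin

abbreviation "G2 \<equiv> gen2 sc sc"
abbreviation "G3 \<equiv> gen3 sc sc sc"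
abbreviation "T2 \<equiv> teqR G2"
abbreviation "T3 \<equiv> teqR G3"

lemma msc: "module sc" using hopf by (simp add: hopf_algebra_def kalg_def)
lemma kmult1: "sc c (x * y) = sc c x * y" using hopf by (simp add: hopf_algebra_def kalg_def)
lemma kmult2: "sc c (x * y) = x * sc c y" using hopf unfolding hopf_algebra_def kalg_def by blast
lemma mscA: "module scA" using comod by (simp add: comodule_algebra_def kalg_def)
lemma kmultA1: "scA c (x * y) = scA c x * y" using comod by (simp add: comodule_algebra_def kalg_def)
lemma kmultA2: "scA c (x * y) = x * scA c y" using comod unfolding comodule_algebra_def kalg_def by blast

lemma D_add: "T2 (\<Delta> (x + y)) (\<Delta> x @ \<Delta> y)"
  using hopf by (simp add: hopf_algebra_def teq2_teqR)
lemma D_sc: "T2 (\<Delta> (sc c x)) (sclL sc c (\<Delta> x))"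
  using hopf by (simp add: hopf_algebra_def teq2_teqR sclL_def)
lemma coass: "T3 (cop2 \<Delta> h) (cop2' \<Delta> h)"
  using hopf by (simp add: hopf_algebra_def teq3_teqR cop2'_def)
lemma eps_hom: "module_hom sc (\<lambda>c x. c * x) \<epsilon>"
  using hopf by (simp add: hopf_algebra_def)
lemma eps_add: "\<epsilon> (x + y) = \<epsilon> x + \<epsilon> y" using module_hom.add[OF eps_hom] .
lemma eps_sc: "\<epsilon> (sc c x) = c * \<epsilon> x" using module_hom.scale[OF eps_hom] .
lemma eps_zero: "\<epsilon> 0 = 0" using module_hom.zero[OF eps_hom] .
lemma cnt1: "sum_list (map (\<lambda>(a, b). sc (\<epsilon> a) b) (\<Delta> h)) = h"
  using hopf by (simp add: hopf_algebra_def)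
lemma cnt2: "sum_list (map (\<lambda>(a, b). sc (\<epsilon> b) a) (\<Delta> h)) = h"
  using hopf by (simp add: hopf_algebra_def)
lemma D_mult: "T2 (\<Delta> (x * y)) (mult (\<Delta> x) (\<Delta> y))"
  using hopf by (simp add: hopf_algebra_def teq2_teqR mult_def)
lemma D_one: "T2 (\<Delta> 1) [(1, 1)]"
  using hopf by (simp add: hopf_algebra_def teq2_teqR)
lemma eps_mult: "\<epsilon> (x * y) = \<epsilon> x * \<epsilon> y"
  using hopf by (simp add: hopf_algebra_def)
lemma eps_one: "\<epsilon> 1 = 1"
  using hopf by (simp add: hopf_algebra_def)
lemma S_hom: "module_hom sc sc S"
  using hopf by (simp add: hopf_algebra_def)
lemma S_add: "S (x + y) = S x + S y" using module_hom.add[OF S_hom] .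
lemma S_sc: "S (sc c x) = sc c (S x)" using module_hom.scale[OF S_hom] .
lemma S_zero: "S 0 = 0" using module_hom.zero[OF S_hom] .
lemma ant1: "sum_list (map (\<lambda>(a, b). S a * b) (\<Delta> h)) = sc (\<epsilon> h) 1"
  using hopf by (simp add: hopf_algebra_def)
lemma ant2: "sum_list (map (\<lambda>(a, b). a * S b) (\<Delta> h)) = sc (\<epsilon> h) 1"
  using hopf by (simp add: hopf_algebra_def)

lemma Sbar_add: "Sbar (x + y) = Sbar x + Sbar y"
  by (metis SS SbS S_add)
lemma Sbar_sc: "Sbar (sc c x) = sc c (Sbar x)"
  by (metis SS SbS S_sc)
lemma Sbar_hom: "module_hom sc sc Sbar"
  by (simp add: module_hom_def module_hom_axioms_def msc Sbar_add Sbar_sc)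

lemma sc_zero: "sc c 0 = 0" using module.scale_zero_right[OF msc] .
lemma sc_zero_left: "sc 0 x = 0" using module.scale_zero_left[OF msc] .

lemma eps_S: "\<epsilon> (S h) = \<epsilon> h"
proof -
  have "\<epsilon> (S h) = \<epsilon> (S (sum_list (map (\<lambda>(a, b). sc (\<epsilon> b) a) (\<Delta> h))))" by (simp add: cnt2)
  also have "\<dots> = sum_list (map (\<lambda>p. \<epsilon> (snd p) * \<epsilon> (S (fst p))) (\<Delta> h))"
    by (simp add: sum_list_hom[of "\<lambda>x. \<epsilon> (S x)"] S_add eps_add S_zero eps_zero S_sc eps_sc split_beta)
  also have "\<dots> = \<epsilon> (sum_list (map (\<lambda>(a, b). S a * b) (\<Delta> h)))"
    by (simp add: sum_list_hom[of \<epsilon>] eps_add eps_zero eps_mult split_beta mult.commute)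
  also have "\<dots> = \<epsilon> h" by (simp add: ant1 eps_sc eps_mult eps_one)
  finally show ?thesis .
qed


lemma mult_Nil1[simp]: "mult [] ys = []" by (simp add: mult_def)
lemma mult_Nil2[simp]: "mult xs [] = []" by (induction xs) (auto simp: mult_def)
lemma mult_Cons1: "mult (x # xs) ys = map (\<lambda>(a', b'). (fst x * a', snd x * b')) ys @ mult xs ys"
  by (simp add: mult_def split_beta)
lemma mult_append1: "mult (xs @ xs') ys = mult xs ys @ mult xs' ys"
  by (simp add: mult_def)
lemma mult_concat1: "mult (concat (map f zs)) ys = concat (map (\<lambda>z. mult (f z) ys) zs)"
  by (induction zs) (auto simp: mult_append1)
lemma mult_single: "mult xs ys = concat (map (\<lambda>p. mult [p] ys) xs)"
  by (induction xs) (auto simp: mult_Cons1)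
lemma mult_assoc: "mult (mult xs ys) zs = mult xs (mult ys zs)"
  by (induction xs) (auto simp: mult_Cons1 mult_append1 mult_def map_concat comp_def case_prod_unfold mult.assoc)

lemma fs_mult_append2: "fs (mult xs (ys @ ys')) = fs (mult xs ys) + fs (mult xs ys')"
  by (induction xs) (auto simp: mult_Cons1 fs_append fs_Nil algebra_simps)
lemma fs_mult_concat2: "fs (mult xs (concat (map f zs))) = sum_list (map (\<lambda>z. fs (mult xs (f z))) zs)"
  by (induction zs) (auto simp: fs_mult_append2 fs_Nil)

lemma mult_sclL1: "mult (sclL sc c xs) ys = sclL sc c (mult xs ys)"
  by (induction xs) (auto simp: mult_Cons1 sclL_def kmult1)
lemma mult_sclL2: "mult xs (sclL sc c ys) = sclL sc c (mult xs ys)"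
  by (induction xs) (auto simp: mult_Cons1 sclL_def kmult2 split_beta)

lemma mult_E1: "mult [(sc c 1, 1)] ys = sclL sc c ys"
  by (simp add: mult_Cons1 sclL_def split_beta kmult1[symmetric])
lemma mult_E2: "mult xs [(sc c 1, 1)] = sclL sc c xs"
  by (induction xs) (auto simp: mult_Cons1 sclL_def split_beta kmult2[symmetric])

lemma mh_lmult: "module_hom sc sc (\<lambda>x. a * x)"
  by (simp add: module_hom_def module_hom_axioms_def msc distrib_left kmult2)
lemma mh_rmult: "module_hom sc sc (\<lambda>x. x * a)"
  by (simp add: module_hom_def module_hom_axioms_def msc distrib_right kmult1)

lemma Lmult1:
  assumes "T2 xs xs'"
  shows "T2 (mult xs ys) (mult xs' ys)"
proof -
  let ?G = "\<lambda>(a, b). map (\<lambda>(a', b'). (a * a', b * b')) ys"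
  have "bil2 fscale sc sc (\<lambda>p. fs (?G p)) (sp G2)"
    unfolding bil2_def
  proof (intro conjI allI)
    fix m m' n show "fs (?G (m + m', n)) - fs (?G (m, n)) - fs (?G (m', n)) \<in> sp G2"
      by (simp, rule map_sp3) (auto intro!: g2a' simp: distrib_right)
  next
    fix m n n' show "fs (?G (m, n + n')) - fs (?G (m, n)) - fs (?G (m, n')) \<in> sp G2"
      by (simp, rule map_sp3) (auto intro!: g2b' simp: distrib_right)
  next
    fix c m n show "fs (?G (sc c m, n)) - fscale c (fs (?G (m, n))) \<in> sp G2"
      by (simp, rule map_spsc) (auto intro!: g2c' simp: kmult1)
  next
    fix c m n show "fs (?G (m, sc c n)) - fscale c (fs (?G (m, n))) \<in> sp G2"
      by (simp, rule map_spsc) (auto intro!: g2d' simp: kmult1)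
  qed
  from K2[OF this] assms show ?thesis by (simp add: mult_def teq2_teqR)
qed

lemma Lmult2:
  assumes "T2 ys ys'"
  shows "T2 (mult xs ys) (mult xs ys')"
  unfolding mult_def
proof (rule teqR_concat_cong)
  fix p assume "p \<in> set xs"
  obtain a b where p: "p = (a, b)" by force
  have "bil2 fscale sc sc (\<lambda>q. fs [(\<lambda>(a', b'). (a * a', b * b')) q]) (sp G2)"
    by (rule bil2_str[OF mh_lmult mh_lmult]) simp
  from K2map[OF this] assms show "T2 ((\<lambda>(a, b). map (\<lambda>(a', b'). (a * a', b * b')) ys) p)
          ((\<lambda>(a, b). map (\<lambda>(a', b'). (a * a', b * b')) ys') p)"
    by (simp add: p teq2_teqR)
qed

lemma mult_concat2: "T2 (mult xs (concat (map f zs))) (concat (map (\<lambda>z. mult xs (f z)) zs))"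
  by (rule teqR_fs) (simp add: fs_mult_concat2 fs_concat)

lemma mult_append2: "T2 (mult xs (ys @ ys')) (mult xs ys @ mult xs ys')"
  by (rule teqR_fs) (simp add: fs_mult_append2 fs_append)

definition lm :: "('h \<Rightarrow> ('h \<times> 'h) list) \<Rightarrow> bool" where
  "lm T \<longleftrightarrow> (\<forall>x y. T2 (T (x + y)) (T x @ T y)) \<and> (\<forall>c x. T2 (T (sc c x)) (sclL sc c (T x)))"

lemma sclL_cong2: "T2 xs ys \<Longrightarrow> T2 (sclL sc c xs) (sclL sc c ys)"
  by (rule teqR_scl_cong[OF sclL_fs2 sclL_fs2])
lemma sclL_append: "sclL t c (xs @ ys) = sclL t c xs @ sclL t c ys"
  by (simp add: sclL_def)

lemma lm_zero: "lm T \<Longrightarrow> T2 (T 0) []"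
  by (rule teqR_empty_of) (metis add_0 lm_def)

lemma lm_sum:
  assumes "lm T"
  shows "T2 (T (sum_list (map f xs))) (concat (map (\<lambda>x. T (f x)) xs))"
proof (induction xs)
  case Nil thus ?case using lm_zero[OF assms] by simp
next
  case (Cons x xs)
  have "T2 (T (f x + sum_list (map f xs))) (T (f x) @ T (sum_list (map f xs)))"
    using assms by (simp add: lm_def)
  moreover have "T2 (T (f x) @ T (sum_list (map f xs))) (T (f x) @ concat (map (\<lambda>x. T (f x)) xs))"
    by (rule teqR_app[OF teqR_refl Cons])
  ultimately show ?case by (simp add: teqR_trans)
qed

lemma lm_D: "lm \<Delta>" by (simp add: lm_def D_add D_sc)

lemma lm_S: "lm T \<Longrightarrow> lm (\<lambda>x. T (S x))"
  by (simp add: lm_def S_add S_sc)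

lemma lm_mult1: "lm P \<Longrightarrow> lm (\<lambda>x. mult (P x) Y)"
  unfolding lm_def
  by (auto simp: mult_sclL1[symmetric] mult_append1[symmetric] intro: Lmult1)

lemma lm_mult2:
  assumes "lm P" shows "lm (\<lambda>x. mult Y (P x))"
  unfolding lm_def
proof (intro conjI allI)
  fix x y
  show "T2 (mult Y (P (x + y))) (mult Y (P x) @ mult Y (P y))"
    using Lmult2[of "P (x+y)" "P x @ P y" Y] assms mult_append2 unfolding lm_def by (blast intro: teqR_trans)
next
  fix c x
  show "T2 (mult Y (P (sc c x))) (sclL sc c (mult Y (P x)))"
    using Lmult2[of "P (sc c x)" "sclL sc c (P x)" Y] assms unfolding lm_def mult_sclL2 by blast
qed

lemma sw_sc: "dlt (x, tN c y) - dlt (tM c x, y) \<in> sp (gen2 tM tN)"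
proof -
  have "dlt (x, tN c y) - dlt (tM c x, y) =
    (dlt (x, tN c y) - fscale c (dlt (x, y))) - (dlt (tM c x, y) - fscale c (dlt (x, y)))" by simp
  thus ?thesis by (metis g2c g2d sp_diff)
qed

definition Gs :: "'h \<Rightarrow> ('h \<times> 'h) list" where
  "Gs h = map (\<lambda>(a, b). (S b, S a)) (\<Delta> h)"

lemma bil_swS: "bil2 fscale sc sc (\<lambda>q. fs [(\<lambda>(a, b). (S b, S a)) q]) (sp G2)"
  by (rule bil2_swp[OF S_hom S_hom]) simp

lemma lm_Gs: "lm Gs"
  unfolding lm_def
proof (intro conjI allI)
  fix x y show "T2 (Gs (x + y)) (Gs x @ Gs y)"
    using K2map[OF bil_swS, of "\<Delta> (x+y)" "\<Delta> x @ \<Delta> y"] D_add by (simp add: Gs_def teq2_teqR)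
next
  fix c x
  have "T2 (Gs (sc c x)) (map (\<lambda>(a, b). (S b, S a)) (sclL sc c (\<Delta> x)))"
    using K2map[OF bil_swS, of "\<Delta> (sc c x)"] D_sc by (simp add: Gs_def teq2_teqR)
  moreover have "T2 (map (\<lambda>(a, b). (S b, S a)) (sclL sc c (\<Delta> x))) (sclL sc c (Gs x))"
    unfolding sclL_def Gs_def map_map
    by (rule map_sp2) (auto simp: S_sc sw_sc)
  ultimately show "T2 (Gs (sc c x)) (sclL sc c (Gs x))" by (rule teqR_trans)
qed


lemma lm_elem1:
  assumes f: "module_hom sc sc f" shows "lm (\<lambda>x. [(f x, b)])"
  unfolding lm_def
proof (intro conjI allI)
  fix x y show "T2 [(f (x + y), b)] ([(f x, b)] @ [(f y, b)])"
    by (rule teqR_diff3_inv) (simp add: fs_single module_hom.add[OF f] g2a)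
next
  fix c x show "T2 [(f (sc c x), b)] (sclL sc c [(f x, b)])"
    by (simp add: sclL_def module_hom.scale[OF f] teqR_refl)
qed

lemma lm_elem2:
  assumes f: "module_hom sc sc f" shows "lm (\<lambda>x. [(a, f x)])"
  unfolding lm_def
proof (intro conjI allI)
  fix x y show "T2 [(a, f (x + y))] ([(a, f x)] @ [(a, f y)])"
    by (rule teqR_diff3_inv) (simp add: fs_single module_hom.add[OF f] g2b)
next
  fix c x show "T2 [(a, f (sc c x))] (sclL sc c [(a, f x)])"
    by (simp add: sclL_def module_hom.scale[OF f] teqR_def fs_single sw_sc)
qed

lemma lm_add_diff: "lm T \<Longrightarrow> fs (T (x + y)) - fs (T x) - fs (T y) \<in> sp G2"
  by (rule teqR_diff3) (simp add: lm_def)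
lemma lm_sc_diff: "lm T \<Longrightarrow> fs (T (sc c x)) - fscale c (fs (T x)) \<in> sp G2"
  by (rule teqR_sc_diff[OF _ sclL_fs2]) (simp add: lm_def)

lemma bil3_of_lm:
  assumes "\<And>n p. lm (\<lambda>m. \<Phi> (m, n, p))" "\<And>m p. lm (\<lambda>n. \<Phi> (m, n, p))" "\<And>m n. lm (\<lambda>p. \<Phi> (m, n, p))"
  shows "bil3 fscale sc sc sc (\<lambda>q. fs (\<Phi> q)) (sp G2)"
  unfolding bil3_def
  apply (intro conjI allI)
       apply (rule lm_add_diff[OF assms(1)])
      apply (rule lm_add_diff[OF assms(2)])
     apply (rule lm_add_diff[OF assms(3)])
    apply (rule lm_sc_diff[OF assms(1)])
   apply (rule lm_sc_diff[OF assms(2)])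
  apply (rule lm_sc_diff[OF assms(3)])
  done

lemma bil2_of_lm:
  assumes "\<And>n. lm (\<lambda>m. \<Phi> (m, n))" "\<And>m. lm (\<lambda>n. \<Phi> (m, n))"
  shows "bil2 fscale sc sc (\<lambda>q. fs (\<Phi> q)) (sp G2)"
  unfolding bil2_def
  apply (intro conjI allI)
     apply (rule lm_add_diff[OF assms(1)])
    apply (rule lm_add_diff[OF assms(2)])
   apply (rule lm_sc_diff[OF assms(1)])
  apply (rule lm_sc_diff[OF assms(2)])
  done

lemma id_hom: "module_hom sc sc (\<lambda>x. x)"
  using mh_id[OF msc] by (simp add: id_def)

lemma teq2_T2: "teq2 sc sc = T2" by (simp add: teq2_teqR)
lemma teq3_T3: "teq3 sc sc sc = T3" by (simp add: teq3_teqR)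

lemma step_i: "T2 (concat (map (\<lambda>(a1, a2). mult (\<Delta> (S a1)) (\<Delta> a2)) (\<Delta> a))) [(sc (\<epsilon> a) 1, 1)]"
proof -
  have 1: "T2 (concat (map (\<lambda>(a1, a2). mult (\<Delta> (S a1)) (\<Delta> a2)) (\<Delta> a)))
             (concat (map (\<lambda>(a1, a2). \<Delta> (S a1 * a2)) (\<Delta> a)))"
    by (rule teqR_concat_cong) (auto intro: teqR_sym[OF D_mult])
  have 2: "T2 (\<Delta> (sum_list (map (\<lambda>(a1, a2). S a1 * a2) (\<Delta> a))))
             (concat (map (\<lambda>(a1, a2). \<Delta> (S a1 * a2)) (\<Delta> a)))"
    using lm_sum[OF lm_D, of "\<lambda>(a1, a2). S a1 * a2" "\<Delta> a"] by (simp add: case_prod_unfold)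
  have 3: "T2 (\<Delta> (sc (\<epsilon> a) 1)) (sclL sc (\<epsilon> a) [(1, 1)])"
    by (rule teqR_trans[OF D_sc sclL_cong2[OF D_one]])
  show ?thesis
    using teqR_trans[OF 1 teqR_sym[OF 2]] 3 by (auto simp: ant1 sclL_def intro: teqR_trans)
qed


lemma mh_xS: "module_hom sc sc (\<lambda>t. x * S t)"
  by (simp add: module_hom_def module_hom_axioms_def msc S_add S_sc distrib_left kmult2)
lemma mh_tSu: "module_hom sc sc (\<lambda>t. t * S u)"
  using mh_rmult by simp

lemma sc_swap1: "T2 [(m, sc c y)] [(sc c m, y)]"
  by (simp add: teqR_def fs_single sw_sc)

lemma inner:
  "T2 (concat (map (\<lambda>(z1, z2). mult [(x, z1)] (Gs z2)) (\<Delta> z))) [(x * S z, 1)]"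
proof -
  define \<Phi> where "\<Phi> = (\<lambda>(z1, u, v). [(x * S v, z1 * S u)])"
  have i1: "concat (map (\<lambda>(z1, z2). mult [(x, z1)] (Gs z2)) (\<Delta> z)) = concat (map \<Phi> (cop2' \<Delta> z))"
    by (simp add: \<Phi>_def cop2'_def Gs_def mult_def map_concat comp_def case_prod_unfold concat_concat_map concat_single)
  have b3: "bil3 fscale sc sc sc (\<lambda>q. fs (\<Phi> q)) (sp G2)"
  proof (rule bil3_of_lm)
    fix n p show "lm (\<lambda>m. \<Phi> (m, n, p))" unfolding \<Phi>_def using lm_elem2[OF mh_tSu] by simp
  next
    fix m p show "lm (\<lambda>n. \<Phi> (m, n, p))" unfolding \<Phi>_def
      using lm_elem2[OF mh_comp[OF S_hom mh_lmult, of m]] by (simp add: comp_def)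
  next
    fix m n show "lm (\<lambda>p. \<Phi> (m, n, p))" unfolding \<Phi>_def using lm_elem1[OF mh_xS] by simp
  qed
  have i2: "T2 (concat (map \<Phi> (cop2' \<Delta> z))) (concat (map \<Phi> (cop2 \<Delta> z)))"
    by (rule K3[OF b3]) (simp add: teq3_T3 teqR_sym[OF coass])
  have i3: "concat (map \<Phi> (cop2 \<Delta> z)) =
     concat (map (\<lambda>(c, d). concat (map (\<lambda>(c1, c2). [(x * S d, c1 * S c2)]) (\<Delta> c))) (\<Delta> z))"
    by (simp add: \<Phi>_def cop2_def map_concat comp_def case_prod_unfold concat_concat_map)
  have i4: "T2 (concat (map (\<lambda>(c1, c2). [(m, c1 * S c2)]) (\<Delta> c))) [(sc (\<epsilon> c) m, 1)]" for m c
  proof -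
    have "T2 [(m, sum_list (map (\<lambda>(c1, c2). c1 * S c2) (\<Delta> c)))] (concat (map (\<lambda>(c1, c2). [(m, c1 * S c2)]) (\<Delta> c)))"
      using lm_sum[OF lm_elem2[OF id_hom, of m], of "\<lambda>(c1, c2). c1 * S c2" "\<Delta> c"] by (simp add: case_prod_unfold)
    from teqR_sym[OF this] have "T2 (concat (map (\<lambda>(c1, c2). [(m, c1 * S c2)]) (\<Delta> c))) [(m, sc (\<epsilon> c) 1)]"
      by (simp add: ant2)
    thus ?thesis using sc_swap1[of m "\<epsilon> c" 1] by (simp add: teqR_trans)
  qed
  have i5: "T2 (concat (map (\<lambda>(c, d). concat (map (\<lambda>(c1, c2). [(x * S d, c1 * S c2)]) (\<Delta> c))) (\<Delta> z)))
               (concat (map (\<lambda>(c, d). [(sc (\<epsilon> c) (x * S d), 1)]) (\<Delta> z)))"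
    by (rule teqR_concat_cong) (auto simp: i4)
  have i6: "T2 [(sum_list (map (\<lambda>(c, d). sc (\<epsilon> c) (x * S d)) (\<Delta> z)), 1)] (concat (map (\<lambda>(c, d). [(sc (\<epsilon> c) (x * S d), 1)]) (\<Delta> z)))"
    using lm_sum[OF lm_elem1[OF id_hom, of 1], of "\<lambda>(c, d). sc (\<epsilon> c) (x * S d)" "\<Delta> z"] by (simp add: case_prod_unfold)
  have i7: "sum_list (map (\<lambda>(c, d). sc (\<epsilon> c) (x * S d)) (\<Delta> z)) = x * S z"
  proof -
    have "x * S z = x * S (sum_list (map (\<lambda>(c, d). sc (\<epsilon> c) d) (\<Delta> z)))" by (simp add: cnt1)
    also have "\<dots> = sum_list (map (\<lambda>p. x * S ((\<lambda>(c, d). sc (\<epsilon> c) d) p)) (\<Delta> z))"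
      by (rule sum_list_hom) (simp_all add: S_add distrib_left S_zero)
    finally show ?thesis by (simp add: case_prod_unfold S_sc kmult2)
  qed
  show ?thesis
    unfolding i1 using teqR_trans[OF i2[unfolded i3] teqR_trans[OF i5 teqR_sym[OF i6]]] i7 by simp
qed

lemma step_ii: "T2 (concat (map (\<lambda>(a, b). mult (\<Delta> a) (Gs b)) (\<Delta> y))) [(sc (\<epsilon> y) 1, 1)]"
proof -
  define \<Psi> where "\<Psi> = (\<lambda>(a1, a2, b). mult [(a1, a2)] (Gs b))"
  have e1: "concat (map (\<lambda>(a, b). mult (\<Delta> a) (Gs b)) (\<Delta> y)) = concat (map \<Psi> (cop2 \<Delta> y))"
    unfolding \<Psi>_def cop2_def
    by (subst mult_single) (simp add: map_concat comp_def case_prod_unfold concat_concat_map)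
  have b3: "bil3 fscale sc sc sc (\<lambda>q. fs (\<Psi> q)) (sp G2)"
  proof (rule bil3_of_lm)
    fix n p show "lm (\<lambda>m. \<Psi> (m, n, p))" unfolding \<Psi>_def
      using lm_mult1[OF lm_elem1[OF id_hom], of n "Gs p"] by simp
  next
    fix m p show "lm (\<lambda>n. \<Psi> (m, n, p))" unfolding \<Psi>_def
      using lm_mult1[OF lm_elem2[OF id_hom], of m "Gs p"] by simp
  next
    fix m n show "lm (\<lambda>p. \<Psi> (m, n, p))" unfolding \<Psi>_def
      using lm_mult2[OF lm_Gs] by simp
  qed
  have e2: "T2 (concat (map \<Psi> (cop2 \<Delta> y))) (concat (map \<Psi> (cop2' \<Delta> y)))"
    by (rule K3[OF b3]) (simp add: teq3_T3 coass)
  have e3: "concat (map \<Psi> (cop2' \<Delta> y)) =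
      concat (map (\<lambda>(x, z). concat (map (\<lambda>(z1, z2). mult [(x, z1)] (Gs z2)) (\<Delta> z))) (\<Delta> y))"
    by (simp add: \<Psi>_def cop2'_def map_concat comp_def case_prod_unfold concat_concat_map)
  have e4: "T2 (concat (map (\<lambda>(x, z). concat (map (\<lambda>(z1, z2). mult [(x, z1)] (Gs z2)) (\<Delta> z))) (\<Delta> y)))
      (concat (map (\<lambda>(x, z). [(x * S z, 1)]) (\<Delta> y)))"
    by (rule teqR_concat_cong) (auto simp: inner)
  have e5: "T2 [(sum_list (map (\<lambda>(x, z). x * S z) (\<Delta> y)), 1)] (concat (map (\<lambda>(x, z). [(x * S z, 1)]) (\<Delta> y)))"
    using lm_sum[OF lm_elem1[OF id_hom, of 1], of "\<lambda>(x, z). x * S z" "\<Delta> y"] by (simp add: case_prod_unfold)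
  show ?thesis unfolding e1 using teqR_trans[OF e2[unfolded e3] teqR_trans[OF e4 teqR_sym[OF e5]]] ant2[of y] by simp
qed


lemma antiA: "T2 (\<Delta> (S h)) (Gs h)"
proof -
  have a0: "T2 (Gs h) (concat (map (\<lambda>(a, b). sclL sc (\<epsilon> a) (Gs b)) (\<Delta> h)))"
  proof -
    have "T2 (Gs (sum_list (map (\<lambda>(a, b). sc (\<epsilon> a) b) (\<Delta> h))))
             (concat (map (\<lambda>(a, b). Gs (sc (\<epsilon> a) b)) (\<Delta> h)))"
      using lm_sum[OF lm_Gs, of "\<lambda>(a, b). sc (\<epsilon> a) b" "\<Delta> h"] by (simp add: case_prod_unfold)
    moreover have "T2 (concat (map (\<lambda>(a, b). Gs (sc (\<epsilon> a) b)) (\<Delta> h)))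
             (concat (map (\<lambda>(a, b). sclL sc (\<epsilon> a) (Gs b)) (\<Delta> h)))"
      by (rule teqR_concat_cong) (use lm_Gs in \<open>auto simp: lm_def\<close>)
    ultimately show ?thesis by (simp add: cnt1 teqR_trans)
  qed
  have a1: "concat (map (\<lambda>(a, b). sclL sc (\<epsilon> a) (Gs b)) (\<Delta> h)) =
            concat (map (\<lambda>(a, b). mult [(sc (\<epsilon> a) 1, 1)] (Gs b)) (\<Delta> h))"
    by (simp add: mult_E1)
  have a2: "T2 (concat (map (\<lambda>(a, b). mult [(sc (\<epsilon> a) 1, 1)] (Gs b)) (\<Delta> h)))
     (concat (map (\<lambda>(a, b). mult (concat (map (\<lambda>(a1, a2). mult (\<Delta> (S a1)) (\<Delta> a2)) (\<Delta> a))) (Gs b)) (\<Delta> h)))"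
    by (rule teqR_concat_cong) (auto intro!: Lmult1 teqR_sym[OF step_i])
  define \<Phi> where "\<Phi> = (\<lambda>(a1, a2, b). mult (mult (\<Delta> (S a1)) (\<Delta> a2)) (Gs b))"
  have a3: "concat (map (\<lambda>(a, b). mult (concat (map (\<lambda>(a1, a2). mult (\<Delta> (S a1)) (\<Delta> a2)) (\<Delta> a))) (Gs b)) (\<Delta> h))
      = concat (map \<Phi> (cop2 \<Delta> h))"
    by (simp add: \<Phi>_def cop2_def mult_concat1 map_concat comp_def case_prod_unfold concat_concat_map)
  have b3: "bil3 fscale sc sc sc (\<lambda>q. fs (\<Phi> q)) (sp G2)"
  proof (rule bil3_of_lm)
    fix n p show "lm (\<lambda>m. \<Phi> (m, n, p))" unfolding \<Phi>_def
      using lm_mult1[OF lm_mult1[OF lm_S[OF lm_D]]] by simp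
  next
    fix m p show "lm (\<lambda>n. \<Phi> (m, n, p))" unfolding \<Phi>_def
      using lm_mult1[OF lm_mult2[OF lm_D]] by simp
  next
    fix m n show "lm (\<lambda>p. \<Phi> (m, n, p))" unfolding \<Phi>_def
      using lm_mult2[OF lm_Gs] by simp
  qed
  have a4: "T2 (concat (map \<Phi> (cop2 \<Delta> h))) (concat (map \<Phi> (cop2' \<Delta> h)))"
    by (rule K3[OF b3]) (simp add: teq3_T3 coass)
  have a5: "concat (map \<Phi> (cop2' \<Delta> h)) =
     concat (map (\<lambda>(x, y). concat (map (\<lambda>(y1, y2). mult (\<Delta> (S x)) (mult (\<Delta> y1) (Gs y2))) (\<Delta> y))) (\<Delta> h))"
    by (simp add: \<Phi>_def cop2'_def mult_assoc map_concat comp_def case_prod_unfold concat_concat_map)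
  have a6: "T2 (concat (map (\<lambda>(y1, y2). mult (\<Delta> (S x)) (mult (\<Delta> y1) (Gs y2))) (\<Delta> y)))
                (\<Delta> (S (sc (\<epsilon> y) x)))" for x y
  proof -
    have "T2 (concat (map (\<lambda>(y1, y2). mult (\<Delta> (S x)) (mult (\<Delta> y1) (Gs y2))) (\<Delta> y)))
             (mult (\<Delta> (S x)) (concat (map (\<lambda>(y1, y2). mult (\<Delta> y1) (Gs y2)) (\<Delta> y))))"
      using teqR_sym[OF mult_concat2[of "\<Delta> (S x)" "\<lambda>(y1, y2). mult (\<Delta> y1) (Gs y2)" "\<Delta> y"]]
      by (simp add: case_prod_unfold)
    moreover have "T2 (mult (\<Delta> (S x)) (concat (map (\<lambda>(y1, y2). mult (\<Delta> y1) (Gs y2)) (\<Delta> y))))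
                      (sclL sc (\<epsilon> y) (\<Delta> (S x)))"
      using Lmult2[OF step_ii[of y], of "\<Delta> (S x)"] by (simp add: mult_E2)
    moreover have "T2 (sclL sc (\<epsilon> y) (\<Delta> (S x))) (\<Delta> (S (sc (\<epsilon> y) x)))"
      using lm_S[OF lm_D] unfolding lm_def by (blast intro: teqR_sym)
    ultimately show ?thesis by (blast intro: teqR_trans)
  qed
  have a7: "T2 (concat (map (\<lambda>(x, y). concat (map (\<lambda>(y1, y2). mult (\<Delta> (S x)) (mult (\<Delta> y1) (Gs y2))) (\<Delta> y))) (\<Delta> h)))
     (concat (map (\<lambda>(x, y). \<Delta> (S (sc (\<epsilon> y) x))) (\<Delta> h)))"
    by (rule teqR_concat_cong) (auto simp: a6)
  have a8: "T2 (\<Delta> (S (sum_list (map (\<lambda>(x, y). sc (\<epsilon> y) x) (\<Delta> h)))))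
     (concat (map (\<lambda>(x, y). \<Delta> (S (sc (\<epsilon> y) x))) (\<Delta> h)))"
    using lm_sum[OF lm_S[OF lm_D], of "\<lambda>(x, y). sc (\<epsilon> y) x" "\<Delta> h"] by (simp add: case_prod_unfold)
  have "T2 (Gs h) (\<Delta> (S h))"
    using teqR_trans[OF a0[unfolded a1] teqR_trans[OF a2[unfolded a3] teqR_trans[OF a4[unfolded a5]
        teqR_trans[OF a7 teqR_sym[OF a8]]]]]
    by (simp add: cnt2)
  thus ?thesis by (rule teqR_sym)
qed


lemma bil2_psi: "bil2 fscale sc sc (\<lambda>q. fs [(\<lambda>(a1, a2). (a1, a2, n)) q]) (sp G3)"
  unfolding bil2_def fs_single by (simp add: g3a g3b g3d g3e)

lemma bil3_rev:
  assumes f: "module_hom sc sc f"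
  shows "bil3 fscale sc sc sc (\<lambda>q. fs [(\<lambda>(x, y, z). (f z, f y, f x)) q]) (sp G3)"
  unfolding bil3_def fs_single
  by (simp add: module_hom.add[OF f] module_hom.scale[OF f] g3a g3b g3c g3d g3e g3f)

lemma antiA3: "T3 (cop2 \<Delta> (S h)) (map (\<lambda>(a1, a2, a3). (S a3, S a2, S a1)) (cop2 \<Delta> h))"
proof -
  define Gc where "Gc = (\<lambda>(a::'h, b::'h). map (\<lambda>(a1, a2). (a1, a2, b)) (\<Delta> a))"
  have c1: "cop2 \<Delta> x = concat (map Gc (\<Delta> x))" for x
    by (simp add: cop2_def Gc_def)
  have bGc: "bil2 fscale sc sc (\<lambda>p. fs (Gc p)) (sp G3)"
    unfolding bil2_def
  proof (intro conjI allI)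
    fix m m' n
    have "T3 (map (\<lambda>(a1, a2). (a1, a2, n)) (\<Delta> (m + m'))) (map (\<lambda>(a1, a2). (a1, a2, n)) (\<Delta> m @ \<Delta> m'))"
      by (rule K2map[OF bil2_psi]) (simp add: teq2_T2 D_add)
    thus "fs (Gc (m + m', n)) - fs (Gc (m, n)) - fs (Gc (m', n)) \<in> sp G3"
      unfolding Gc_def by (intro teqR_diff3) simp
  next
    fix m n n'
    show "fs (Gc (m, n + n')) - fs (Gc (m, n)) - fs (Gc (m, n')) \<in> sp G3"
      unfolding Gc_def by (simp, rule map_sp3) (auto intro!: g3c')
  next
    fix c m n
    have "T3 (map (\<lambda>(a1, a2). (a1, a2, n)) (\<Delta> (sc c m))) (map (\<lambda>(a1, a2). (a1, a2, n)) (sclL sc c (\<Delta> m)))"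
      by (rule K2map[OF bil2_psi]) (simp add: teq2_T2 D_sc)
    moreover have "map (\<lambda>(a1, a2). (a1, a2, n)) (sclL sc c (\<Delta> m)) = sclL sc c (map (\<lambda>(a1, a2). (a1, a2, n)) (\<Delta> m))"
      by (simp add: sclL_def case_prod_unfold)
    ultimately have "T3 (map (\<lambda>(a1, a2). (a1, a2, n)) (\<Delta> (sc c m))) (sclL sc c (map (\<lambda>(a1, a2). (a1, a2, n)) (\<Delta> m)))"
      by simp
    from teqR_sc_diff[OF this sclL_fs3]
    show "fs (Gc (sc c m, n)) - fscale c (fs (Gc (m, n))) \<in> sp G3"
      unfolding Gc_def by simp
  next
    fix c m n
    show "fs (Gc (m, sc c n)) - fscale c (fs (Gc (m, n))) \<in> sp G3"
      unfolding Gc_def by (simp, rule map_spsc) (auto intro!: g3f')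
  qed
  have c2: "T3 (concat (map Gc (\<Delta> (S h)))) (concat (map Gc (Gs h)))"
    by (rule K2[OF bGc]) (simp add: teq2_T2 antiA)
  have c3: "concat (map Gc (Gs h)) = concat (map (\<lambda>(a, b). map (\<lambda>(u, v). (u, v, S a)) (\<Delta> (S b))) (\<Delta> h))"
    by (simp add: Gc_def Gs_def case_prod_unfold comp_def)
  have c4: "T3 (concat (map (\<lambda>(a, b). map (\<lambda>(u, v). (u, v, S a)) (\<Delta> (S b))) (\<Delta> h)))
     (concat (map (\<lambda>(a, b). map (\<lambda>(u, v). (u, v, S a)) (Gs b)) (\<Delta> h)))"
  proof (rule teqR_concat_cong)
    fix p assume "p \<in> set (\<Delta> h)"
    obtain a b where p: "p = (a, b)" by force
    have "T3 (map (\<lambda>(u, v). (u, v, S a)) (\<Delta> (S b))) (map (\<lambda>(u, v). (u, v, S a)) (Gs b))"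
      by (rule K2map[OF bil2_psi]) (simp add: teq2_T2 antiA)
    thus "T3 ((\<lambda>(a, b). map (\<lambda>(u, v). (u, v, S a)) (\<Delta> (S b))) p) ((\<lambda>(a, b). map (\<lambda>(u, v). (u, v, S a)) (Gs b)) p)"
      by (simp add: p)
  qed
  define R3 where "R3 = (\<lambda>(x::'h, y::'h, z::'h). [(S z, S y, S x)])"
  have c5: "concat (map (\<lambda>(a, b). map (\<lambda>(u, v). (u, v, S a)) (Gs b)) (\<Delta> h)) = concat (map R3 (cop2' \<Delta> h))"
    by (simp add: R3_def Gs_def cop2'_def map_concat comp_def case_prod_unfold concat_concat_map concat_single)
  have c6: "T3 (concat (map R3 (cop2' \<Delta> h))) (concat (map R3 (cop2 \<Delta> h)))"
  proof -
    have "T3 (map (\<lambda>(x, y, z). (S z, S y, S x)) (cop2' \<Delta> h)) (map (\<lambda>(x, y, z). (S z, S y, S x)) (cop2 \<Delta> h))"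
      by (rule K3map[OF bil3_rev[OF S_hom]]) (simp add: teq3_T3 teqR_sym[OF coass])
    thus ?thesis by (simp add: R3_def case_prod_unfold concat_single)
  qed
  have c7: "concat (map R3 (cop2 \<Delta> h)) = map (\<lambda>(a1, a2, a3). (S a3, S a2, S a1)) (cop2 \<Delta> h)"
    by (simp add: R3_def case_prod_unfold concat_single)
  show ?thesis
    unfolding c1[of "S h"] using teqR_trans[OF c2[unfolded c3] teqR_trans[OF c4[unfolded c5] c6[unfolded c7]]] .
qed

lemma bil_swSb: "bil2 fscale sc sc (\<lambda>q. fs [(\<lambda>(a, b). (Sbar b, Sbar a)) q]) (sp G2)"
  by (rule bil2_swp[OF Sbar_hom Sbar_hom]) simp

lemma antiB: "T2 (\<Delta> (Sbar h)) (map (\<lambda>(a, b). (Sbar b, Sbar a)) (\<Delta> h))"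
proof -
  have "T2 (\<Delta> h) (Gs (Sbar h))" using antiA[of "Sbar h"] by (simp add: SS)
  from K2map[OF bil_swSb, of "\<Delta> h" "Gs (Sbar h)"] this
  have "T2 (map (\<lambda>(a, b). (Sbar b, Sbar a)) (\<Delta> h)) (\<Delta> (Sbar h))"
    by (simp add: teq2_T2 Gs_def SbS case_prod_unfold comp_def)
  thus ?thesis by (rule teqR_sym)
qed

lemma antiB3: "T3 (cop2 \<Delta> (Sbar h)) (map (\<lambda>(a1, a2, a3). (Sbar a3, Sbar a2, Sbar a1)) (cop2 \<Delta> h))"
proof -
  have "T3 (cop2 \<Delta> h) (map (\<lambda>(a1, a2, a3). (S a3, S a2, S a1)) (cop2 \<Delta> (Sbar h)))"
    using antiA3[of "Sbar h"] by (simp add: SS)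
  from K3map[OF bil3_rev[OF Sbar_hom], OF this[folded teq3_T3]]
  have "T3 (map (\<lambda>(a1, a2, a3). (Sbar a3, Sbar a2, Sbar a1)) (cop2 \<Delta> h)) (cop2 \<Delta> (Sbar h))"
    by (simp add: SbS case_prod_unfold comp_def)
  thus ?thesis by (rule teqR_sym)
qed


abbreviation "GA \<equiv> gen2 scA sc"
abbreviation "TA \<equiv> teqR GA"

lemma teq2A: "teq2 scA sc = TA" by (simp add: teq2_teqR)

lemma bil3_w1:
  assumes f: "module_hom sc scA f" and g: "module_hom sc sc g" and k: "module_hom sc sc k"
  shows "bil3 fscale sc sc sc (\<lambda>q. fs [(\<lambda>(a1, a2, a3). (f a2, g a3 * k a1)) q]) (sp GA)"
  unfolding bil3_def fs_single
  by (simp add: module_hom.add[OF f] module_hom.scale[OF f] module_hom.add[OF g] module_hom.scale[OF g]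
      module_hom.add[OF k] module_hom.scale[OF k] distrib_left distrib_right kmult1[symmetric] kmult2[symmetric]
      g2a g2b g2c g2d)

lemma bil3_w2:
  assumes f: "module_hom sc scA f" and g: "module_hom sc sc g" and k: "module_hom sc sc k"
  shows "bil3 fscale sc sc sc (\<lambda>q. fs [(\<lambda>(a1, a2, a3). (f a2, k a1 * g a3)) q]) (sp GA)"
  unfolding bil3_def fs_single
  by (simp add: module_hom.add[OF f] module_hom.scale[OF f] module_hom.add[OF g] module_hom.scale[OF g]
      module_hom.add[OF k] module_hom.scale[OF k] distrib_left distrib_right kmult1[symmetric] kmult2[symmetric]
      g2a g2b g2c g2d)

lemma CA'_hom: "f \<in> CA' sc \<Delta> Sbar scA \<rho> i j \<Longrightarrow> module_hom sc scA f"
  by (cases i; cases j) auto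
lemma CA_hom: "f \<in> CA sc \<Delta> S scA \<rho> i j \<Longrightarrow> module_hom sc scA f"
  by (cases i; cases j) auto

lemma part1:
  assumes "f \<in> CA' sc \<Delta> Sbar scA \<rho> i j"
  shows "f \<circ> S \<in> CA sc \<Delta> S scA \<rho> i j"
proof -
  have hom: "module_hom sc scA f" using CA'_hom[OF assms] .
  have homS: "module_hom sc scA (f \<circ> S)" by (rule mh_comp[OF S_hom hom])
  show ?thesis
  proof (cases i; cases j)
    assume "i = One" "j = One" thus ?thesis using assms homS by auto
  next
    assume ij: "i = One" "j = Two"
    have hyp: "TA (\<rho> (f x)) (map (\<lambda>(a, b). (f a, b)) (\<Delta> x))" for x
      using assms ij by (simp add: teq2A)
    have "TA (\<rho> (f (S h))) (map (\<lambda>(a, b). ((f \<circ> S) b, S a)) (\<Delta> h))" for h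
    proof -
      have "TA (map (\<lambda>(a, b). (f a, b)) (\<Delta> (S h))) (map (\<lambda>(a, b). (f a, b)) (Gs h))"
        by (rule K2map[OF bil2_str[OF hom id_hom]]) (simp_all add: teq2_T2 antiA)
      thus ?thesis using hyp[of "S h"] by (simp add: Gs_def case_prod_unfold comp_def teqR_trans)
    qed
    thus ?thesis using ij homS by (simp add: teq2A)
  next
    assume ij: "i = Two" "j = One"
    have hyp: "TA (\<rho> (f x)) (map (\<lambda>(a, b). (f b, Sbar a)) (\<Delta> x))" for x
      using assms ij by (simp add: teq2A)
    have "TA (\<rho> (f (S h))) (map (\<lambda>(a, b). ((f \<circ> S) a, b)) (\<Delta> h))" for h
    proof -
      have "TA (map (\<lambda>(a, b). (f b, Sbar a)) (\<Delta> (S h))) (map (\<lambda>(a, b). (f b, Sbar a)) (Gs h))"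
        by (rule K2map[OF bil2_swp[OF hom Sbar_hom]]) (simp_all add: teq2_T2 antiA)
      thus ?thesis using hyp[of "S h"] by (simp add: Gs_def case_prod_unfold comp_def SbS teqR_trans)
    qed
    thus ?thesis using ij homS by (simp add: teq2A)
  next
    assume ij: "i = Two" "j = Two"
    have hyp: "TA (\<rho> (f x)) (map (\<lambda>(a1, a2, a3). (f a2, a3 * Sbar a1)) (cop2 \<Delta> x))" for x
      using assms ij by (simp add: teq2A)
    have "TA (\<rho> (f (S h))) (map (\<lambda>(a1, a2, a3). ((f \<circ> S) a2, S a1 * a3)) (cop2 \<Delta> h))" for h
    proof -
      have "TA (map (\<lambda>(a1, a2, a3). (f a2, a3 * Sbar a1)) (cop2 \<Delta> (S h)))
               (map (\<lambda>(a1, a2, a3). (f a2, a3 * Sbar a1)) (map (\<lambda>(a1, a2, a3). (S a3, S a2, S a1)) (cop2 \<Delta> h)))"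
        by (rule K3map[OF bil3_w1[OF hom id_hom Sbar_hom]]) (simp add: teq3_T3 antiA3)
      thus ?thesis using hyp[of "S h"] by (simp add: case_prod_unfold comp_def SbS teqR_trans)
    qed
    thus ?thesis using ij homS by (simp add: teq2A)
  qed
qed

lemma part4:
  assumes "f \<in> CA sc \<Delta> S scA \<rho> i j"
  shows "f \<circ> Sbar \<in> CA' sc \<Delta> Sbar scA \<rho> i j"
proof -
  have hom: "module_hom sc scA f" using CA_hom[OF assms] .
  have homS: "module_hom sc scA (f \<circ> Sbar)" by (rule mh_comp[OF Sbar_hom hom])
  show ?thesis
  proof (cases i; cases j)
    assume "i = One" "j = One" thus ?thesis using assms homS by auto
  next
    assume ij: "i = One" "j = Two"
    have hyp: "TA (\<rho> (f x)) (map (\<lambda>(a, b). (f b, S a)) (\<Delta> x))" for x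
      using assms ij by (simp add: teq2A)
    have "TA (\<rho> (f (Sbar h))) (map (\<lambda>(a, b). ((f \<circ> Sbar) a, b)) (\<Delta> h))" for h
    proof -
      have "TA (map (\<lambda>(a, b). (f b, S a)) (\<Delta> (Sbar h))) (map (\<lambda>(a, b). (f b, S a)) (map (\<lambda>(a, b). (Sbar b, Sbar a)) (\<Delta> h)))"
        by (rule K2map[OF bil2_swp[OF hom S_hom]]) (simp_all add: teq2_T2 antiB)
      thus ?thesis using hyp[of "Sbar h"] by (simp add: case_prod_unfold comp_def SS teqR_trans)
    qed
    thus ?thesis using ij homS by (simp add: teq2A)
  next
    assume ij: "i = Two" "j = One"
    have hyp: "TA (\<rho> (f x)) (map (\<lambda>(a, b). (f a, b)) (\<Delta> x))" for x
      using assms ij by (simp add: teq2A)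
    have "TA (\<rho> (f (Sbar h))) (map (\<lambda>(a, b). ((f \<circ> Sbar) b, Sbar a)) (\<Delta> h))" for h
    proof -
      have "TA (map (\<lambda>(a, b). (f a, b)) (\<Delta> (Sbar h))) (map (\<lambda>(a, b). (f a, b)) (map (\<lambda>(a, b). (Sbar b, Sbar a)) (\<Delta> h)))"
        by (rule K2map[OF bil2_str[OF hom id_hom]]) (simp_all add: teq2_T2 antiB)
      thus ?thesis using hyp[of "Sbar h"] by (simp add: case_prod_unfold comp_def teqR_trans)
    qed
    thus ?thesis using ij homS by (simp add: teq2A)
  next
    assume ij: "i = Two" "j = Two"
    have hyp: "TA (\<rho> (f x)) (map (\<lambda>(a1, a2, a3). (f a2, S a1 * a3)) (cop2 \<Delta> x))" for x
      using assms ij by (simp add: teq2A)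
    have "TA (\<rho> (f (Sbar h))) (map (\<lambda>(a1, a2, a3). ((f \<circ> Sbar) a2, a3 * Sbar a1)) (cop2 \<Delta> h))" for h
    proof -
      have "TA (map (\<lambda>(a1, a2, a3). (f a2, S a1 * a3)) (cop2 \<Delta> (Sbar h)))
               (map (\<lambda>(a1, a2, a3). (f a2, S a1 * a3)) (map (\<lambda>(a1, a2, a3). (Sbar a3, Sbar a2, Sbar a1)) (cop2 \<Delta> h)))"
        by (rule K3map[OF bil3_w2[OF hom id_hom S_hom]]) (simp add: teq3_T3 antiB3)
      thus ?thesis using hyp[of "Sbar h"] by (simp add: case_prod_unfold comp_def SS teqR_trans)
    qed
    thus ?thesis using ij homS by (simp add: teq2A)
  qed
qed

lemma part2:
  assumes f: "module_hom sc scA f" and g: "module_hom sc scA g"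
  shows "conv' \<Delta> g f \<circ> S = conv \<Delta> (g \<circ> S) (f \<circ> S)"
proof
  fix h
  have b: "bil2 scA sc sc (\<lambda>(a, b). g b * f a) {0}"
    unfolding bil2_def
    by (simp add: module_hom.add[OF f] module_hom.scale[OF f] module_hom.add[OF g] module_hom.scale[OF g]
      distrib_left distrib_right kmultA1[symmetric] kmultA2[symmetric])
  have "sum_list (map (\<lambda>(a, b). g b * f a) (\<Delta> (S h))) = sum_list (map (\<lambda>(a, b). g b * f a) (Gs h))"
    by (rule KE2[OF mscA b]) (simp add: teq2_T2 antiA)
  thus "(conv' \<Delta> g f \<circ> S) h = conv \<Delta> (g \<circ> S) (f \<circ> S) h"
    by (simp add: conv'_def conv_def Gs_def case_prod_unfold comp_def)
qed

lemma part3: "cid \<epsilon> scA \<circ> S = cid \<epsilon> scA"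
  by (simp add: fun_eq_iff cid_def eps_S)

end

theorem proposition2p1:
  fixes sc :: "'k::comm_ring_1 \<Rightarrow> 'h::ring_1 \<Rightarrow> 'h"
    and \<Delta> :: "'h \<Rightarrow> ('h \<times> 'h) list" and \<epsilon> :: "'h \<Rightarrow> 'k"
    and S Sbar :: "'h \<Rightarrow> 'h"
    and scA :: "'k \<Rightarrow> 'a::ring_1 \<Rightarrow> 'a" and \<rho> :: "'a \<Rightarrow> ('a \<times> 'h) list"
  assumes "hopf_algebra sc \<Delta> \<epsilon> S"
    and "\<And>h. S (Sbar h) = h" and "\<And>h. Sbar (S h) = h"
    and "comodule_algebra sc \<Delta> \<epsilon> scA \<rho>"
  shows
    \<comment> \<open>gamma(f') = f' o S maps C'_A(i,j) into C_A(i,j)\<close>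
    "(\<forall>i j. \<forall>f' \<in> CA' sc \<Delta> Sbar scA \<rho> i j. f' \<circ> S \<in> CA sc \<Delta> S scA \<rho> i j)
     \<comment> \<open>gamma preserves composition\<close>
   \<and> (\<forall>i j l. \<forall>f' \<in> CA' sc \<Delta> Sbar scA \<rho> i j. \<forall>g' \<in> CA' sc \<Delta> Sbar scA \<rho> j l.
        conv' \<Delta> g' f' \<circ> S = conv \<Delta> (g' \<circ> S) (f' \<circ> S))
     \<comment> \<open>gamma preserves identities\<close>
   \<and> cid \<epsilon> scA \<circ> S = cid \<epsilon> scA
     \<comment> \<open>the inverse functor f \<mapsto> f o Sbar maps C_A(i,j) into C'_A(i,j)\<close>
   \<and> (\<forall>i j. \<forall>f \<in> CA sc \<Delta> S scA \<rho> i j. f \<circ> Sbar \<in> CA' sc \<Delta> Sbar scA \<rho> i j)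
     \<comment> \<open>and is inverse to gamma on morphisms\<close>
   \<and> (\<forall>i j. \<forall>f' \<in> CA' sc \<Delta> Sbar scA \<rho> i j. (f' \<circ> S) \<circ> Sbar = f')
   \<and> (\<forall>i j. \<forall>f \<in> CA sc \<Delta> S scA \<rho> i j. (f \<circ> Sbar) \<circ> S = f)"
  proof -
  interpret HC sc \<Delta> \<epsilon> S Sbar scA \<rho> using assms by unfold_locales
  show ?thesis
  proof (intro conjI allI ballI)
    fix i j f' assume "f' \<in> CA' sc \<Delta> Sbar scA \<rho> i j"
    thus "f' \<circ> S \<in> CA sc \<Delta> S scA \<rho> i j" by (rule part1)
  next
    fix i j l f' g' assume "f' \<in> CA' sc \<Delta> Sbar scA \<rho> i j" "g' \<in> CA' sc \<Delta> Sbar scA \<rho> j l"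
    thus "conv' \<Delta> g' f' \<circ> S = conv \<Delta> (g' \<circ> S) (f' \<circ> S)"
      by (intro part2 CA'_hom)
  next
    show "cid \<epsilon> scA \<circ> S = cid \<epsilon> scA" by (rule part3)
  next
    fix i j f assume "f \<in> CA sc \<Delta> S scA \<rho> i j"
    thus "f \<circ> Sbar \<in> CA' sc \<Delta> Sbar scA \<rho> i j" by (rule part4)
  next
    fix i j f' show "f' \<circ> S \<circ> Sbar = f'" by (simp add: fun_eq_iff SS)
  next
    fix i j f show "f \<circ> Sbar \<circ> S = f" by (simp add: fun_eq_iff SbS)
  qed
qed

end
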